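(* Let $G$ be a graph and let $v_1,\dots,v_d$ be vertices forming a cut in $G$. Let $C$ be one of the connected components of $G-\{v_1,\dots,v_d\}$ and let $G'$ be the union of the remaining components. Then $$\tilde b(G)\le\tilde b(C)\,\tilde b(G')+\sum_{i=1}^d\tilde b(G^i),\qquad G^i=G-N[v_i]-\{v_1,\dots,v_{i-1}\}.$$
   Context: $N[u]$ is the closed neighborhood of $u$ (its neighbors together with $u$); $G-A$ is the induced subgraph on $V(G)\setminus A$. $\mathrm{Ind}(G)$ is the independence complex of $G$ (including the empty face), and $\tilde b(G)=\sum_{i\ge-1}\dim_{\mathbb{K}}\widetilde H_i(\mathrm{Ind}(G);\mathbb{K})$ for a fixed field $\mathbb{K}$; the empty graph has $\tilde b=1$. *)

theory Defs
  imports Complex_Main "HOL-Library.Function_Algebras"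
begin

text \<open>The induced subgraph on a vertex set S is
represented by the pair (E, S): only edges between vertices of S matter.\<close>

definition simple_graph :: "'a set \<Rightarrow> ('a \<Rightarrow> 'a \<Rightarrow> bool) \<Rightarrow> bool" where
  "simple_graph V E \<longleftrightarrow> finite V \<and> (\<forall>u v. E u v \<longrightarrow> E v u) \<and> (\<forall>v. \<not> E v v)"

definition closed_nbhd :: "'a set \<Rightarrow> ('a \<Rightarrow> 'a \<Rightarrow> bool) \<Rightarrow> 'a \<Rightarrow> 'a set" where
  "closed_nbhd V E u = insert u {w \<in> V. E u w}"

definition component_of :: "('a \<Rightarrow> 'a \<Rightarrow> bool) \<Rightarrow> 'a set \<Rightarrow> 'a \<Rightarrow> 'a set" where
  "component_of E S x = {y. (x, y) \<in> {(u, w). u \<in> S \<and> w \<in> S \<and> E u w}\<^sup>* \<and> y \<in> S}"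

definition is_component :: "('a \<Rightarrow> 'a \<Rightarrow> bool) \<Rightarrow> 'a set \<Rightarrow> 'a set \<Rightarrow> bool" where
  "is_component E S C \<longleftrightarrow> (\<exists>x\<in>S. C = component_of E S x)"

definition Ind :: "('a \<Rightarrow> 'a \<Rightarrow> bool) \<Rightarrow> 'a set \<Rightarrow> 'a set set" where
  "Ind E S = {\<sigma>. \<sigma> \<subseteq> S \<and> (\<forall>u\<in>\<sigma>. \<forall>w\<in>\<sigma>. \<not> E u w)}"

text \<open>Simplicial chains of the augmented (reduced) chain complex of a simplicial
complex Delta with coefficients in the field 'k, graded by the number k of
vertices of a face (so k = i + 1 for homological degree i; k = 0 is the empty
face in degree -1).\<close>
definition chains :: "'k itself \<Rightarrow> 'a set set \<Rightarrow> nat \<Rightarrow> ('a set \<Rightarrow> 'k::field) set" where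
  "chains _ \<Delta> k = {f. \<forall>\<sigma>. f \<sigma> \<noteq> 0 \<longrightarrow> \<sigma> \<in> \<Delta> \<and> card \<sigma> = k}"

definition boundary :: "'a::linorder set \<Rightarrow> ('a set \<Rightarrow> 'k::field) \<Rightarrow> ('a set \<Rightarrow> 'k)" where
  "boundary S f = (\<lambda>\<tau>. \<Sum>v\<in>S - \<tau>. (- 1) ^ card {u\<in>\<tau>. u < v} * f (insert v \<tau>))"

definition chain_scale :: "'k::field \<Rightarrow> ('a set \<Rightarrow> 'k) \<Rightarrow> ('a set \<Rightarrow> 'k)" where
  "chain_scale c f = (\<lambda>x. c * f x)"

definition chain_dim :: "('a set \<Rightarrow> 'k::field) set \<Rightarrow> nat" where
  "chain_dim W = vector_space.dim chain_scale W"

text \<open>dim_K of the reduced homology of Delta (vertices in S) in degree k - 1: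
  dim ker(boundary_k) - dim im(boundary_{k+1}).\<close>
definition reduced_betti :: "'k::field itself \<Rightarrow> 'a::linorder set \<Rightarrow> 'a set set \<Rightarrow> nat \<Rightarrow> nat" where
  "reduced_betti K S \<Delta> k =
     chain_dim {f \<in> chains K \<Delta> k. boundary S f = (0 :: 'a set \<Rightarrow> 'k)}
     - chain_dim (boundary S ` chains K \<Delta> (Suc k))"

text \<open>btilde(G) for the induced subgraph on S: sum of all reduced Betti numbers
of Ind(G) over the field 'k (degrees -1 .. |S|-1; higher chain groups vanish).\<close>
definition btilde :: "'k::field itself \<Rightarrow> ('a::linorder \<Rightarrow> 'a \<Rightarrow> bool) \<Rightarrow> 'a set \<Rightarrow> nat" where
  "btilde K E S = (\<Sum>k\<le>card S. reduced_betti K S (Ind E S) k)"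

end

theory Submission
  imports Defs
begin

lemma fun_sum_apply: "(\<Sum>i\<in>I. f i) x = (\<Sum>i\<in>I. f i x)"
  by (induction I rule: infinite_finite_induct) auto

context vector_space begin

lemma fin_basis:
  assumes "finite W" "V \<subseteq> span W"
  obtains B where "B \<subseteq> V" "independent B" "V \<subseteq> span B" "finite B" "card B = dim V"
proof -
  obtain B where B: "B \<subseteq> V" "independent B" "V \<subseteq> span B" "card B = dim V"
    using basis_exists by blast
  have "finite B" using independent_span_bound[OF assms(1) B(2)] B(1) assms(2) by blast
  then show ?thesis using B that by blast
qed

lemma indep_card_le_dim:
  assumes "finite W" "V \<subseteq> span W" "B \<subseteq> V" "independent B"
  shows "finite B" "card B \<le> dim V"
proof -
  obtain Bv where Bv: "Bv \<subseteq> V" "independent Bv" "V \<subseteq> span Bv" "finite Bv" "card Bv = dim V"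
    using fin_basis[OF assms(1,2)] by blast
  have "B \<subseteq> span Bv" using assms(3) Bv(3) by blast
  from independent_span_bound[OF Bv(4) assms(4) this] Bv(5)
  show "finite B" "card B \<le> dim V" by auto
qed

lemma dim_mono_fd:
  assumes "finite W" "T \<subseteq> span W" "S \<subseteq> T"
  shows "dim S \<le> dim T"
proof -
  obtain B where B: "B \<subseteq> S" "independent B" "S \<subseteq> span B" "finite B" "card B = dim S"
    using fin_basis[OF assms(1), of S] assms by blast
  show ?thesis using indep_card_le_dim[OF assms(1,2), of B] B assms(3) by auto
qed

lemma indep_union_proj:
  assumes hom: "module_hom scale scale f"
  and iX: "independent X" and iL: "independent (f ` L)" and inj: "inj_on f L"
  and kill: "\<And>x. x \<in> X \<Longrightarrow> f x = 0"
  shows "independent (X \<union> L)" "X \<inter> L = {}"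
proof -
  show disj: "X \<inter> L = {}"
  proof (rule ccontr)
    assume "X \<inter> L \<noteq> {}"
    then obtain x where "x \<in> X" "x \<in> L" by blast
    then have "0 \<in> f ` L" using kill by force
    then show False using iL dependent_zero by blast
  qed
  show "independent (X \<union> L)"
    unfolding independent_explicit_module
  proof (intro allI impI)
    fix t u v
    assume t: "finite t" "t \<subseteq> X \<union> L" and s0: "(\<Sum>v\<in>t. u v *s v) = 0" and v: "v \<in> t"
    have split: "(\<Sum>v\<in>t. u v *s v) = (\<Sum>v\<in>t\<inter>X. u v *s v) + (\<Sum>v\<in>t\<inter>L. u v *s v)"
    proof -
      have "t = (t \<inter> X) \<union> (t \<inter> L)" using t(2) by blast
      then have "(\<Sum>v\<in>t. u v *s v) = (\<Sum>v\<in>(t \<inter> X) \<union> (t \<inter> L). u v *s v)" by simp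
      also have "\<dots> = (\<Sum>v\<in>t\<inter>X. u v *s v) + (\<Sum>v\<in>t\<inter>L. u v *s v)"
        by (rule sum.union_disjoint) (use t(1) disj in auto)
      finally show ?thesis .
    qed
    have "f (\<Sum>v\<in>t. u v *s v) = (\<Sum>v\<in>t. u v *s f v)"
      by (simp add: module_hom.sum[OF hom] module_hom.scale[OF hom])
    also have "\<dots> = (\<Sum>v\<in>t\<inter>X. u v *s f v) + (\<Sum>v\<in>t\<inter>L. u v *s f v)"
    proof -
      have "t = (t \<inter> X) \<union> (t \<inter> L)" using t(2) by blast
      then have "(\<Sum>v\<in>t. u v *s f v) = (\<Sum>v\<in>(t \<inter> X) \<union> (t \<inter> L). u v *s f v)" by simp
      also have "\<dots> = (\<Sum>v\<in>t\<inter>X. u v *s f v) + (\<Sum>v\<in>t\<inter>L. u v *s f v)"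
        by (rule sum.union_disjoint) (use t(1) disj in auto)
      finally show ?thesis .
    qed
    also have "(\<Sum>v\<in>t\<inter>X. u v *s f v) = 0" using kill by (intro sum.neutral) auto
    finally have fL: "(\<Sum>v\<in>t\<inter>L. u v *s f v) = 0" using s0 module_hom.zero[OF hom] by simp
    have injt: "inj_on f (t \<inter> L)" using inj by (rule inj_on_subset) blast
    have "(\<Sum>y\<in>f ` (t\<inter>L). u (the_inv_into (t\<inter>L) f y) *s y) = (\<Sum>v\<in>t\<inter>L. u v *s f v)"
      by (subst sum.reindex[OF injt]) (simp add: the_inv_into_f_f[OF injt])
    then have fL': "(\<Sum>y\<in>f ` (t\<inter>L). u (the_inv_into (t\<inter>L) f y) *s y) = 0" using fL by simp
    have uL: "u w = 0" if "w \<in> t \<inter> L" for w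
    proof -
      have "u (the_inv_into (t\<inter>L) f (f w)) = 0"
        by (rule independentD[OF iL _ _ fL']) (use t(1) that in auto)
      then show ?thesis using the_inv_into_f_f[OF injt that] by simp
    qed
    have "(\<Sum>v\<in>t\<inter>L. u v *s v) = 0" using uL by (intro sum.neutral) auto
    then have sX: "(\<Sum>v\<in>t\<inter>X. u v *s v) = 0" using s0 split by simp
    show "u v = 0"
    proof (cases "v \<in> L")
      case True then show ?thesis using uL v by blast
    next
      case False
      then have vX: "v \<in> t \<inter> X" using v t(2) by blast
      show ?thesis using independentD[OF iX, of "t \<inter> X" u v] sX t(1) vX by auto
    qed
  qed
qed

lemma lift_basis:
  assumes hom: "module_hom scale scale f" and "finite W" "f ` Y \<subseteq> span W"
  obtains L where "L \<subseteq> Y" "inj_on f L" "independent (f ` L)" "f ` Y \<subseteq> span (f ` L)"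
    "finite L" "card L = dim (f ` Y)"
proof -
  obtain B where B: "B \<subseteq> f ` Y" "independent B" "f ` Y \<subseteq> span B" "finite B" "card B = dim (f ` Y)"
    using fin_basis[OF assms(2,3)] by blast
  define g where "g y = (SOME x. x \<in> Y \<and> f x = y)" for y
  have g: "g y \<in> Y \<and> f (g y) = y" if "y \<in> B" for y
  proof -
    have "\<exists>x. x \<in> Y \<and> f x = y" using that B(1) by blast
    then show ?thesis unfolding g_def by (rule someI_ex)
  qed
  have fg: "f ` (g ` B) = B" using g by (force simp: image_image)
  have injg: "inj_on g B" using g by (metis inj_onI)
  have "inj_on f (g ` B)" using g by (force intro!: inj_onI)
  moreover have "card (g ` B) = card B" using card_image[OF injg] .
  ultimately show ?thesis using that[of "g ` B"] B fg g by auto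
qed

lemma rank_nullity_ge:
  assumes hom: "module_hom scale scale f" and W: "finite W" "T \<subseteq> span W" "subspace T"
  and XT: "X \<subseteq> T" and YT: "Y \<subseteq> T" and kill: "\<And>x. x \<in> X \<Longrightarrow> f x = 0"
  and fW: "finite W'" "f ` Y \<subseteq> span W'"
  shows "dim X + dim (f ` Y) \<le> dim T"
proof -
  obtain Bx where Bx: "Bx \<subseteq> X" "independent Bx" "X \<subseteq> span Bx" "finite Bx" "card Bx = dim X"
    using fin_basis[OF W(1), of X] XT W(2) by blast
  obtain L where L: "L \<subseteq> Y" "inj_on f L" "independent (f ` L)" "f ` Y \<subseteq> span (f ` L)"
    "finite L" "card L = dim (f ` Y)"
    using lift_basis[OF hom fW] by blast
  have i: "independent (Bx \<union> L)" "Bx \<inter> L = {}"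
    using indep_union_proj[OF hom Bx(2) L(3) L(2)] kill Bx(1) by auto
  have "card (Bx \<union> L) \<le> dim T"
    by (rule indep_card_le_dim(2)[OF W(1,2) _ i(1)]) (use Bx(1) L(1) XT YT in auto)
  moreover have "card (Bx \<union> L) = card Bx + card L" using card_Un_disjoint[OF Bx(4) L(5) i(2)] .
  ultimately show ?thesis using Bx(5) L(6) by simp
qed

lemma rank_sum_ge:
  assumes hom: "module_hom scale scale f" and W: "finite W" "T \<subseteq> span W" "subspace T"
  and XT: "X \<subseteq> T" and YT: "Y \<subseteq> T" and kill: "\<And>x. x \<in> X \<Longrightarrow> f x = 0"
  and fix_: "\<And>y. y \<in> Y \<Longrightarrow> f y = y"
  shows "dim X + dim Y \<le> dim T"
proof -
  have "f ` Y = Y" using fix_ by force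
  then show ?thesis using rank_nullity_ge[OF hom W XT YT kill W(1)] YT W(2) by auto
qed

lemma rank_nullity_le:
  assumes hom: "module_hom scale scale f" and W: "finite W" "U \<subseteq> span W" "subspace U"
  and fW: "finite W'" "f ` U \<subseteq> span W'"
  shows "dim U \<le> dim {x \<in> U. f x = 0} + dim (f ` U)"
proof -
  let ?Z = "{x \<in> U. f x = 0}"
  obtain Bz where Bz: "Bz \<subseteq> ?Z" "independent Bz" "?Z \<subseteq> span Bz" "finite Bz" "card Bz = dim ?Z"
    using fin_basis[OF W(1), of ?Z] W(2) by blast
  obtain L where L: "L \<subseteq> U" "inj_on f L" "independent (f ` L)" "f ` U \<subseteq> span (f ` L)"
    "finite L" "card L = dim (f ` U)"
    using lift_basis[OF hom fW] by blast
  have "U \<subseteq> span (Bz \<union> L)"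
  proof
    fix u assume u: "u \<in> U"
    then have "f u \<in> f ` span L" using L(4) module_hom.span_image[OF hom, of L] by blast
    then obtain l where l: "l \<in> span L" "f l = f u" by auto
    have lU: "l \<in> U" using l(1) span_minimal[OF L(1) W(3)] by blast
    have "u - l \<in> ?Z" using u lU l(2) W(3) subspace_diff module_hom.diff[OF hom] by auto
    then have "u - l \<in> span (Bz \<union> L)" using Bz(3) span_mono[of Bz "Bz \<union> L"] by blast
    moreover have "l \<in> span (Bz \<union> L)" using l(1) span_mono[of L "Bz \<union> L"] by blast
    ultimately have "(u - l) + l \<in> span (Bz \<union> L)" by (rule span_add)
    then show "u \<in> span (Bz \<union> L)" by simp
  qed
  then have "dim U \<le> card (Bz \<union> L)" using dim_le_card Bz(4) L(5) by blast
  also have "\<dots> \<le> card Bz + card L" by (rule card_Un_le)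
  finally show ?thesis using Bz(5) L(6) by simp
qed

lemma rank_nullity:
  assumes hom: "module_hom scale scale f" and W: "finite W" "U \<subseteq> span W" "subspace U"
  and fW: "finite W'" "f ` U \<subseteq> span W'"
  shows "dim U = dim {x \<in> U. f x = 0} + dim (f ` U)"
proof -
  have "dim {x \<in> U. f x = 0} + dim (f ` U) \<le> dim U"
    by (rule rank_nullity_ge[OF hom W, where X = "{x \<in> U. f x = 0}" and Y = U and W' = W']) (use fW in auto)
  then show ?thesis using rank_nullity_le[OF assms] by simp
qed

lemma dim_zero_set: "dim {0} = 0"
  using dim_span[of "{}"] dim_eq_card_independent[of "{}"] independent_empty by simp

lemma dim_inj_image:
  assumes hom: "module_hom scale scale f" and W: "finite W" "U \<subseteq> span W" "subspace U"
  and fW: "finite W'" "f ` U \<subseteq> span W'" and inj: "inj_on f U"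
  shows "dim (f ` U) = dim U"
proof -
  have "{x \<in> U. f x = 0} \<subseteq> {0}"
  proof
    fix x assume x: "x \<in> {x \<in> U. f x = 0}"
    then have "f x = f 0" using module_hom.zero[OF hom] by simp
    then have "x = 0" using inj_onD[OF inj] x subspace_0[OF W(3)] by blast
    then show "x \<in> {0}" by simp
  qed
  then have "dim {x \<in> U. f x = 0} = 0"
    using dim_mono_fd[of "{}" "{0}" "{x \<in> U. f x = 0}"] dim_zero_set by simp
  then show ?thesis using rank_nullity[OF assms(1-6)] by simp
qed

lemma dim_union_le:
  assumes "finite W" "A \<subseteq> span W" "finite W'" "B \<subseteq> span W'" "T \<subseteq> span (A \<union> B)"
  shows "dim T \<le> dim A + dim B"
proof -
  obtain Ba where Ba: "Ba \<subseteq> A" "independent Ba" "A \<subseteq> span Ba" "finite Ba" "card Ba = dim A"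
    using fin_basis[OF assms(1,2)] by blast
  obtain Bb where Bb: "Bb \<subseteq> B" "independent Bb" "B \<subseteq> span Bb" "finite Bb" "card Bb = dim B"
    using fin_basis[OF assms(3,4)] by blast
  have "A \<union> B \<subseteq> span (Ba \<union> Bb)" using Ba(3) Bb(3) span_mono[of Ba "Ba \<union> Bb"] span_mono[of Bb "Ba \<union> Bb"] by blast
  then have "span (A \<union> B) \<subseteq> span (Ba \<union> Bb)" using span_minimal subspace_span by blast
  then have "dim T \<le> card (Ba \<union> Bb)" using assms(5) dim_le_card Ba(4) Bb(4) by (meson finite_UnI order_trans)
  also have "\<dots> \<le> card Ba + card Bb" by (rule card_Un_le)
  finally show ?thesis using Ba(5) Bb(5) by simp
qed

end

interpretation V: vector_space "chain_scale :: 'k::field \<Rightarrow> ('a set \<Rightarrow> 'k) \<Rightarrow> _"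
  by unfold_locales (auto simp: chain_scale_def algebra_simps fun_eq_iff)

lemma chain_dim_V: "chain_dim W = V.dim W" unfolding chain_dim_def ..

lemma chain_scale_apply: "chain_scale c f x = c * f x" by (simp add: chain_scale_def)

lemma module_cs: "module (chain_scale :: 'k::field \<Rightarrow> ('a set \<Rightarrow> 'k) \<Rightarrow> _)"
  using V.vector_space_axioms module_iff_vector_space by blast

lemma hom_intro:
  fixes f :: "('a set \<Rightarrow> 'k::field) \<Rightarrow> ('b set \<Rightarrow> 'k)"
  assumes "\<And>x y. f (x + y) = f x + f y" "\<And>c x. f (chain_scale c x) = chain_scale c (f x)"
  shows "module_hom chain_scale chain_scale f"
  using assms by (simp add: module_hom_iff module_cs)

definition chon :: "'a set set \<Rightarrow> ('a set \<Rightarrow> 'k::field) set" where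
  "chon F = {f. \<forall>\<sigma>. f \<sigma> \<noteq> 0 \<longrightarrow> \<sigma> \<in> F}"

definition delta :: "'a set \<Rightarrow> ('a set \<Rightarrow> 'k::field)" where
  "delta \<sigma> = (\<lambda>\<tau>. if \<tau> = \<sigma> then 1 else 0)"

definition restr :: "'a set set \<Rightarrow> ('a set \<Rightarrow> 'k::field) \<Rightarrow> ('a set \<Rightarrow> 'k)" where
  "restr F f = (\<lambda>\<sigma>. if \<sigma> \<in> F then f \<sigma> else 0)"

lemma chains_chon: "chains K \<Delta> k = chon {\<sigma> \<in> \<Delta>. card \<sigma> = k}"
  unfolding chains_def chon_def by auto

lemma chon_subspace: "V.subspace (chon F)"
  unfolding V.subspace_def chon_def by (auto simp: chain_scale_apply, metis add.right_neutral)

lemma chon_mono: "F \<subseteq> G \<Longrightarrow> chon F \<subseteq> chon G"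
  unfolding chon_def by auto

lemma chon_repr:
  assumes "finite F" "f \<in> chon F"
  shows "f = (\<Sum>\<sigma>\<in>F. chain_scale (f \<sigma>) (delta \<sigma>))"
proof
  fix \<tau>
  have "(\<Sum>\<sigma>\<in>F. chain_scale (f \<sigma>) (delta \<sigma>)) \<tau> = (\<Sum>\<sigma>\<in>F. f \<sigma> * (if \<tau> = \<sigma> then 1 else 0))"
    by (simp add: fun_sum_apply delta_def chain_scale_apply)
  also have "\<dots> = (if \<tau> \<in> F then f \<tau> else 0)"
    using assms(1) by (simp add: if_distrib[of "\<lambda>x. f _ * x"] sum.delta' cong: if_cong)
  also have "\<dots> = f \<tau>" using assms(2) unfolding chon_def by auto
  finally show "f \<tau> = (\<Sum>\<sigma>\<in>F. chain_scale (f \<sigma>) (delta \<sigma>)) \<tau>" by simp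
qed

lemma delta_inj: "inj delta"
proof (rule injI)
  fix x y assume "delta x = (delta y :: 'a set \<Rightarrow> 'k::field)"
  then have "delta x x = (delta y x :: 'k)" by simp
  then show "x = y" by (simp add: delta_def split: if_splits)
qed

lemma delta_indep: "V.independent ((delta :: 'a set \<Rightarrow> 'a set \<Rightarrow> 'k::field) ` F)"
  unfolding V.independent_explicit_module
proof (intro allI impI)
  fix t u v
  assume t: "finite t" "t \<subseteq> (delta :: 'a set \<Rightarrow> 'a set \<Rightarrow> 'k) ` F"
    and s: "(\<Sum>v\<in>t. chain_scale (u v) v) = 0" and v: "v \<in> t"
  obtain \<sigma> where \<sigma>: "v = delta \<sigma>" using v t(2) by blast
  have "0 = (\<Sum>w\<in>t. chain_scale (u w) w) \<sigma>" using s by simp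
  also have "\<dots> = (\<Sum>w\<in>t. u w * w \<sigma>)" by (simp add: fun_sum_apply chain_scale_apply)
  also have "\<dots> = (\<Sum>w\<in>t. if w = v then u w else 0)"
  proof (rule sum.cong[OF refl])
    fix w assume "w \<in> t"
    then obtain \<rho> where "w = delta \<rho>" using t(2) by blast
    show "u w * w \<sigma> = (if w = v then u w else 0)"
    proof (cases "\<rho> = \<sigma>")
      case True then show ?thesis using \<open>w = delta \<rho>\<close> \<sigma> by (simp add: delta_def)
    next
      case False
      then have "w \<noteq> v" using \<open>w = delta \<rho>\<close> \<sigma> delta_inj by (auto dest: injD)
      then show ?thesis using False \<open>w = delta \<rho>\<close> by (simp add: delta_def)
    qed
  qed
  also have "\<dots> = u v" using t(1) v by simp
  finally show "u v = 0" by simp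
qed

lemma chon_span:
  assumes "finite F"
  shows "chon F = V.span ((delta :: 'a set \<Rightarrow> 'a set \<Rightarrow> 'k::field) ` F)"
proof
  show "chon F \<subseteq> V.span ((delta :: 'a set \<Rightarrow> 'a set \<Rightarrow> 'k::field) ` F)"
  proof
    fix f :: "'a set \<Rightarrow> 'k" assume "f \<in> chon F"
    then have "f = (\<Sum>\<sigma>\<in>F. chain_scale (f \<sigma>) (delta \<sigma>))" using chon_repr assms by blast
    also have "\<dots> \<in> V.span (delta ` F)"
      by (intro V.span_sum V.span_scale V.span_base) auto
    finally show "f \<in> V.span (delta ` F)" .
  qed
  show "V.span (delta ` F) \<subseteq> (chon F :: ('a set \<Rightarrow> 'k) set)"
    by (rule V.span_minimal[OF _ chon_subspace]) (auto simp: chon_def delta_def split: if_splits)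
qed

lemma chon_fd: "finite F \<Longrightarrow> chon F \<subseteq> V.span ((delta :: 'a set \<Rightarrow> 'a set \<Rightarrow> 'k::field) ` F)"
  using chon_span by blast

lemma dim_chon:
  assumes "finite F" shows "V.dim (chon F :: ('a set \<Rightarrow> 'k::field) set) = card F"
proof -
  have "(chon F :: ('a set \<Rightarrow> 'k::field) set) = V.span (delta ` F)" by (rule chon_span[OF assms])
  then have "V.dim (chon F :: ('a set \<Rightarrow> 'k::field) set) = V.dim ((delta :: 'a set \<Rightarrow> 'a set \<Rightarrow> 'k) ` F)" by simp
  also have "\<dots> = card ((delta :: 'a set \<Rightarrow> 'a set \<Rightarrow> 'k) ` F)" by (rule V.dim_eq_card_independent[OF delta_indep])
  also have "\<dots> = card F" by (rule card_image[OF inj_on_subset[OF delta_inj]]) simp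
  finally show ?thesis .
qed

lemma hom_restr: "module_hom chain_scale chain_scale (restr F :: ('a set \<Rightarrow> 'k::field) \<Rightarrow> _)"
  by (rule hom_intro) (auto simp: restr_def fun_eq_iff chain_scale_apply)

lemma restr_chon: "f \<in> chon G \<Longrightarrow> restr F f \<in> chon (F \<inter> G)"
  unfolding restr_def chon_def by auto

lemma restr_id: "f \<in> chon F \<Longrightarrow> restr F f = f"
  unfolding restr_def chon_def by (auto simp: fun_eq_iff)

lemma restr_zero: "f \<in> chon G \<Longrightarrow> F \<inter> G = {} \<Longrightarrow> restr F f = 0"
  unfolding restr_def chon_def by (auto simp: fun_eq_iff)

lemma hom_boundary: "module_hom chain_scale chain_scale (boundary S :: ('a::linorder set \<Rightarrow> 'k::field) \<Rightarrow> _)"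
proof (rule hom_intro)
  fix x y :: "'a set \<Rightarrow> 'k"
  show "boundary S (x + y) = boundary S x + boundary S y"
    by (simp add: boundary_def fun_eq_iff distrib_left sum.distrib)
  fix c
  show "boundary S (chain_scale c x) = chain_scale c (boundary S x)"
    by (simp add: boundary_def fun_eq_iff sum_distrib_left mult.left_commute chain_scale_apply)
qed

definition dclosed :: "'a set set \<Rightarrow> bool" where
  "dclosed F \<longleftrightarrow> (\<forall>\<sigma>\<in>F. \<forall>\<tau>. \<tau> \<subseteq> \<sigma> \<longrightarrow> \<tau> \<in> F)"

abbreviation sg :: "'a::linorder set \<Rightarrow> 'a \<Rightarrow> 'k::field" where
  "sg \<tau> v \<equiv> (- 1) ^ card {u \<in> \<tau>. u < v}"

lemma boundary_apply:
  "boundary S f \<tau> = (\<Sum>v\<in>S - \<tau>. sg \<tau> v * f (insert v \<tau>))"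
  by (simp add: boundary_def)

lemma boundary_nonzero:
  assumes "boundary S f \<tau> \<noteq> 0"
  shows "\<exists>v\<in>S - \<tau>. f (insert v \<tau>) \<noteq> 0"
proof (rule ccontr)
  assume "\<not> ?thesis"
  then have "boundary S f \<tau> = 0" unfolding boundary_apply by (intro sum.neutral) auto
  then show False using assms by simp
qed

lemma boundary_chon:
  assumes "dclosed F" "f \<in> chon F"
  shows "boundary S f \<in> chon F"
proof (unfold chon_def, rule CollectI, intro allI impI)
  fix \<tau> assume "boundary S f \<tau> \<noteq> 0"
  then obtain v where "f (insert v \<tau>) \<noteq> 0" using boundary_nonzero by blast
  then have "insert v \<tau> \<in> F" using assms(2) unfolding chon_def by blast
  then show "\<tau> \<in> F" using assms(1) unfolding dclosed_def by blast
qed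

lemma boundary_chon_graded:
  assumes "dclosed F" "\<forall>\<sigma>\<in>F. finite \<sigma>" "f \<in> chon {\<sigma>\<in>F. card \<sigma> = Suc k}"
  shows "boundary S f \<in> chon {\<sigma>\<in>F. card \<sigma> = k}"
proof (unfold chon_def, rule CollectI, intro allI impI)
  fix \<tau> assume "boundary S f \<tau> \<noteq> 0"
  then obtain v where v: "v \<in> S - \<tau>" "f (insert v \<tau>) \<noteq> 0" using boundary_nonzero by blast
  then have i: "insert v \<tau> \<in> F" "card (insert v \<tau>) = Suc k" using assms(3) unfolding chon_def by blast+
  then have "finite \<tau>" using assms(2) by auto
  then have "card \<tau> = k" using i(2) v(1) by simp
  moreover have "\<tau> \<in> F" using i(1) assms(1) unfolding dclosed_def by blast
  ultimately show "\<tau> \<in> {\<sigma> \<in> F. card \<sigma> = k}" by simp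
qed

lemma boundary_sub:
  assumes "f \<in> chon F" "\<forall>\<sigma>\<in>F. \<sigma> \<subseteq> S'" "S' \<subseteq> S" "finite S"
  shows "boundary S f = boundary S' f"
proof
  fix \<tau>
  have "(\<Sum>v\<in>S' - \<tau>. sg \<tau> v * f (insert v \<tau>)) = (\<Sum>v\<in>S - \<tau>. sg \<tau> v * f (insert v \<tau>))"
  proof (rule sum.mono_neutral_left)
    show "finite (S - \<tau>)" using assms(4) by simp
    show "S' - \<tau> \<subseteq> S - \<tau>" using assms(3) by blast
    show "\<forall>i\<in>S - \<tau> - (S' - \<tau>). sg \<tau> i * f (insert i \<tau>) = (0 :: 'b)"
    proof
      fix i assume "i \<in> S - \<tau> - (S' - \<tau>)"
      then have "\<not> insert i \<tau> \<subseteq> S'" by blast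
      then have "f (insert i \<tau>) = 0" using assms(1,2) unfolding chon_def by blast
      then show "sg \<tau> i * f (insert i \<tau>) = (0 :: 'b)" by simp
    qed
  qed
  then show "boundary S f \<tau> = boundary S' f \<tau>" by (simp add: boundary_apply)
qed

lemma boundary_zero_deg:
  assumes "f \<in> chon F" "F \<subseteq> {{}}"
  shows "boundary S f = 0"
proof
  fix \<tau>
  have "boundary S f \<tau> = 0"
  proof (rule ccontr)
    assume "boundary S f \<tau> \<noteq> 0"
    then obtain v where "f (insert v \<tau>) \<noteq> 0" using boundary_nonzero by blast
    then show False using assms unfolding chon_def by auto
  qed
  then show "boundary S f \<tau> = 0 \<tau>" by simp
qed

lemma card_less_insert:
  assumes "finite \<tau>" "v \<notin> \<tau>"
  shows "card {u \<in> insert v \<tau>. u < w} = card {u \<in> \<tau>. u < w} + (if v < w then 1 else 0)"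
proof (cases "v < w")
  case True
  then have "{u \<in> insert v \<tau>. u < w} = insert v {u \<in> \<tau>. u < w}" by auto
  then show ?thesis using assms True by simp
next
  case False
  then have "{u \<in> insert v \<tau>. u < w} = {u \<in> \<tau>. u < w}" by auto
  then show ?thesis using False by simp
qed

lemma sum_offdiag_antisym:
  fixes g :: "'a::linorder \<Rightarrow> 'a \<Rightarrow> 'b::ab_group_add"
  assumes "finite A" "\<And>v w. v \<in> A \<Longrightarrow> w \<in> A \<Longrightarrow> v \<noteq> w \<Longrightarrow> g v w = - g w v"
  shows "(\<Sum>v\<in>A. \<Sum>w\<in>A - {v}. g v w) = 0"
proof -
  let ?P = "Sigma A (\<lambda>v. A - {v})"
  let ?P1 = "{p \<in> ?P. fst p < snd p}"
  let ?P2 = "{p \<in> ?P. snd p < fst p}"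
  have fin: "finite ?P" using assms(1) by auto
  have "(\<Sum>v\<in>A. \<Sum>w\<in>A - {v}. g v w) = (\<Sum>p\<in>?P. g (fst p) (snd p))"
    by (subst sum.Sigma) (use assms(1) in \<open>auto simp: case_prod_beta\<close>)
  also have "?P = ?P1 \<union> ?P2" by (auto simp: neq_iff)
  also have "(\<Sum>p\<in>?P1 \<union> ?P2. g (fst p) (snd p)) = (\<Sum>p\<in>?P1. g (fst p) (snd p)) + (\<Sum>p\<in>?P2. g (fst p) (snd p))"
    by (rule sum.union_disjoint) (use fin in auto)
  also have "?P2 = prod.swap ` ?P1" by (auto simp: image_iff)
  also have "(\<Sum>p\<in>prod.swap ` ?P1. g (fst p) (snd p)) = (\<Sum>p\<in>?P1. g (snd p) (fst p))"
    by (subst sum.reindex) (auto intro: inj_on_subset[OF swap_inj_on])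
  also have "(\<Sum>p\<in>?P1. g (fst p) (snd p)) + (\<Sum>p\<in>?P1. g (snd p) (fst p)) = (\<Sum>p\<in>?P1. g (fst p) (snd p) + g (snd p) (fst p))"
    by (simp add: sum.distrib)
  also have "\<dots> = 0" using assms(2) by (intro sum.neutral) auto
  finally show ?thesis .
qed

lemma bd_bd:
  fixes f :: "'a::linorder set \<Rightarrow> 'k::field"
  assumes "finite S" "\<And>\<sigma>. f \<sigma> \<noteq> 0 \<Longrightarrow> finite \<sigma>"
  shows "boundary S (boundary S f) = 0"
proof
  fix \<tau>
  let ?A = "S - \<tau>"
  define g where "g v w = sg \<tau> v * (sg (insert v \<tau>) w * f (insert w (insert v \<tau>)))" for v w
  have eq: "boundary S (boundary S f) \<tau> = (\<Sum>v\<in>?A. \<Sum>w\<in>?A - {v}. g v w)"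
  proof -
    have "boundary S (boundary S f) \<tau> = (\<Sum>v\<in>?A. sg \<tau> v * (\<Sum>w\<in>S - insert v \<tau>. sg (insert v \<tau>) w * f (insert w (insert v \<tau>))))"
      by (simp only: boundary_apply)
    also have "\<dots> = (\<Sum>v\<in>?A. \<Sum>w\<in>?A - {v}. g v w)"
    proof (rule sum.cong[OF refl])
      fix v
      show "sg \<tau> v * (\<Sum>w\<in>S - insert v \<tau>. sg (insert v \<tau>) w * f (insert w (insert v \<tau>))) = (\<Sum>w\<in>?A - {v}. g v w)"
        unfolding g_def by (subst Diff_insert) (rule sum_distrib_left)
    qed
    finally show ?thesis .
  qed
  have "(\<Sum>v\<in>?A. \<Sum>w\<in>?A - {v}. g v w) = 0"
  proof (rule sum_offdiag_antisym)
    show "finite ?A" using assms(1) by simp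
    fix v w assume vw: "v \<in> ?A" "w \<in> ?A" "v \<noteq> w"
    show "g v w = - g w v"
    proof (cases "finite \<tau>")
      case False
      then have "f (insert w (insert v \<tau>)) = 0" "f (insert v (insert w \<tau>)) = 0"
        using assms(2) by (metis finite_insert)+
      then show ?thesis by (simp add: g_def)
    next
      case True
      have c1: "card {u \<in> insert v \<tau>. u < w} = card {u \<in> \<tau>. u < w} + (if v < w then 1 else 0)"
        by (rule card_less_insert) (use True vw in auto)
      have c2: "card {u \<in> insert w \<tau>. u < v} = card {u \<in> \<tau>. u < v} + (if w < v then 1 else 0)"
        by (rule card_less_insert) (use True vw in auto)
      have ff: "f (insert v (insert w \<tau>)) = f (insert w (insert v \<tau>))" by (simp add: insert_commute)
      show ?thesis
      proof (cases "v < w")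
        case True
        then have "\<not> w < v" by simp
        then show ?thesis using True unfolding g_def c1 c2 ff by (simp add: power_add)
      next
        case False
        then have "w < v" using vw(3) by simp
        then show ?thesis using False unfolding g_def c1 c2 ff by (simp add: power_add)
      qed
    qed
  qed
  then show "boundary S (boundary S f) \<tau> = 0 \<tau>" using eq by simp
qed

lemma image_zero_dim:
  assumes "\<And>x. x \<in> U \<Longrightarrow> f x = (0 :: 'a set \<Rightarrow> 'k::field)"
  shows "V.dim (f ` U) = 0"
proof -
  have "f ` U \<subseteq> {0}" using assms by auto
  moreover have "{0::'a set \<Rightarrow> 'k} \<subseteq> V.span {}" by simp
  ultimately have "V.dim (f ` U) \<le> V.dim {0::'a set \<Rightarrow> 'k}"
    using V.dim_mono_fd[of "{}" "{0}" "f ` U"] by blast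
  moreover have "V.dim {0::'a set \<Rightarrow> 'k} = 0" by (rule V.dim_zero_set)
  ultimately show ?thesis by simp
qed

lemma boundary_support:
  assumes "f \<in> chon A" "\<forall>\<sigma>\<in>A. finite \<sigma>"
  shows "boundary S f \<in> chon {\<tau>. \<exists>v. v \<notin> \<tau> \<and> insert v \<tau> \<in> A}"
proof (unfold chon_def, rule CollectI, intro allI impI)
  fix \<tau> assume "boundary S f \<tau> \<noteq> 0"
  then obtain v where v: "v \<in> S - \<tau>" "f (insert v \<tau>) \<noteq> 0" using boundary_nonzero by blast
  then show "\<tau> \<in> {\<tau>. \<exists>v. v \<notin> \<tau> \<and> insert v \<tau> \<in> A}" using assms(1) unfolding chon_def by blast
qed

lemma subspace_boundary_image: "V.subspace (boundary S ` chon F)"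
  by (rule module_hom.subspace_image[OF hom_boundary chon_subspace])

lemma dim_graded_sum:
  fixes S :: "'a::linorder set"
  assumes S: "finite S" and FS: "F \<subseteq> Pow S" and dc: "dclosed F"
  shows "V.dim (boundary S ` chon {\<sigma>\<in>F. card \<sigma> < m} :: ('a set \<Rightarrow> 'k::field) set)
     = (\<Sum>k<m. V.dim (boundary S ` chon {\<sigma>\<in>F. card \<sigma> = k} :: ('a set \<Rightarrow> 'k) set))"
proof (induction m)
  case 0
  have "{\<sigma>\<in>F. card \<sigma> < 0} = {}" by simp
  then have "chon {\<sigma>\<in>F. card \<sigma> < 0} = {0 :: 'a set \<Rightarrow> 'k}" by (auto simp: chon_def fun_eq_iff)
  have "V.dim (boundary S ` chon {\<sigma>\<in>F. card \<sigma> < 0} :: ('a set \<Rightarrow> 'k) set) = 0"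
    by (rule image_zero_dim) (use \<open>chon {\<sigma>\<in>F. card \<sigma> < 0} = {0 :: 'a set \<Rightarrow> 'k}\<close> module_hom.zero[OF hom_boundary] in auto)
  then show ?case by simp
next
  case (Suc m)
  have finF: "finite F" using S FS by (meson finite_Pow_iff rev_finite_subset)
  have finmem: "\<forall>\<sigma>\<in>F. finite \<sigma>" using S FS by (auto intro: rev_finite_subset)
  let ?G = "{\<sigma>\<in>F. card \<sigma> < m}" and ?Fm = "{\<sigma>\<in>F. card \<sigma> = m}"
  let ?X = "boundary S ` chon ?G :: ('a set \<Rightarrow> 'k) set"
  let ?Y = "boundary S ` chon ?Fm :: ('a set \<Rightarrow> 'k) set"
  let ?T = "boundary S ` chon {\<sigma>\<in>F. card \<sigma> < Suc m} :: ('a set \<Rightarrow> 'k) set"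
  have un: "{\<sigma>\<in>F. card \<sigma> < Suc m} = ?G \<union> ?Fm" by auto
  have TF: "?T \<subseteq> chon F"
    using boundary_chon[OF dc] chon_mono[of "{\<sigma>\<in>F. card \<sigma> < Suc m}" F] by blast
  have XT: "?X \<subseteq> ?T" by (rule image_mono[OF chon_mono]) auto
  have YT: "?Y \<subseteq> ?T" by (rule image_mono[OF chon_mono]) auto
  have fG: "\<forall>\<sigma>\<in>?G. finite \<sigma>" using finmem by simp
  have fFm: "\<forall>\<sigma>\<in>?Fm. finite \<sigma>" using finmem by simp
  have spT: "?T \<subseteq> V.span (delta ` F)" using TF chon_fd[OF finF] by blast
  let ?P = "restr {\<tau>. card \<tau> + 1 = m} :: ('a set \<Rightarrow> 'k) \<Rightarrow> _"
  have Xk: "?P x = 0" if "x \<in> ?X" for x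
  proof -
    obtain f where f: "f \<in> chon ?G" "x = boundary S f" using \<open>x \<in> ?X\<close> by blast
    have "x \<in> chon {\<tau>. \<exists>v. v \<notin> \<tau> \<and> insert v \<tau> \<in> ?G}"
      using boundary_support[OF f(1) fG] f(2) by simp
    moreover have "{\<tau>. card \<tau> + 1 = m} \<inter> {\<tau>. \<exists>v. v \<notin> \<tau> \<and> insert v \<tau> \<in> ?G} = {}"
    proof -
      { fix \<tau> v assume "card \<tau> + 1 = m" "v \<notin> \<tau>" "insert v \<tau> \<in> ?G"
        then have "insert v \<tau> \<in> F" by simp
        then have "finite (insert v \<tau>)" by (rule bspec[OF finmem])
        then have False using \<open>card \<tau> + 1 = m\<close> \<open>v \<notin> \<tau>\<close> \<open>insert v \<tau> \<in> ?G\<close> by simp }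
      then show ?thesis by blast
    qed
    ultimately show ?thesis by (rule restr_zero)
  qed
  have Pid: "?P y = y" if "y \<in> ?Y" for y
  proof -
    obtain f where f: "f \<in> chon ?Fm" "y = boundary S f" using \<open>y \<in> ?Y\<close> by blast
    have "y \<in> chon {\<tau>. \<exists>v. v \<notin> \<tau> \<and> insert v \<tau> \<in> ?Fm}"
      using boundary_support[OF f(1) fFm] f(2) by simp
    moreover have sub: "{\<tau>. \<exists>v. v \<notin> \<tau> \<and> insert v \<tau> \<in> ?Fm} \<subseteq> {\<tau>. card \<tau> + 1 = m}"
    proof
      fix \<tau> assume "\<tau> \<in> {\<tau>. \<exists>v. v \<notin> \<tau> \<and> insert v \<tau> \<in> ?Fm}"
      then obtain v where v: "v \<notin> \<tau>" "insert v \<tau> \<in> ?Fm" by blast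
      then have "insert v \<tau> \<in> F" by simp
      then have "finite (insert v \<tau>)" by (rule bspec[OF finmem])
      then have "finite \<tau>" by simp
      then show "\<tau> \<in> {\<tau>. card \<tau> + 1 = m}" using v by simp
    qed
    ultimately have "y \<in> chon {\<tau>. card \<tau> + 1 = m}" using chon_mono[OF sub] by blast
    then show ?thesis by (rule restr_id)
  qed
  have ge: "V.dim ?X + V.dim ?Y \<le> V.dim ?T"
    by (rule V.rank_sum_ge[OF hom_restr finite_imageI[OF finF] spT subspace_boundary_image XT YT Xk Pid])
  have le: "V.dim ?T \<le> V.dim ?X + V.dim ?Y"
  proof (rule V.dim_union_le)
    show "finite (delta ` F :: ('a set \<Rightarrow> 'k) set)" using finF by simp
    show "?X \<subseteq> V.span (delta ` F)" using XT spT by blast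
    show "finite (delta ` F :: ('a set \<Rightarrow> 'k) set)" using finF by simp
    show "?Y \<subseteq> V.span (delta ` F)" using YT spT by blast
    show "?T \<subseteq> V.span (?X \<union> ?Y)"
    proof
      fix x assume "x \<in> ?T"
      then obtain f where f0: "f \<in> chon {\<sigma>\<in>F. card \<sigma> < Suc m}" "x = boundary S f" by blast
      have f: "f \<in> chon (?G \<union> ?Fm)" "x = boundary S f" using f0 un by simp_all
      have fdec: "f = restr ?G f + restr ?Fm f"
      proof
        fix \<sigma> show "f \<sigma> = (restr ?G f + restr ?Fm f) \<sigma>"
          using f(1) unfolding restr_def chon_def plus_fun_def by auto
      qed
      have "boundary S f = boundary S (restr ?G f + restr ?Fm f)" using arg_cong[OF fdec, of "boundary S"] .
      then have xe: "x = boundary S (restr ?G f) + boundary S (restr ?Fm f)"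
        using f(2) module_hom.add[OF hom_boundary] by simp
      have "restr ?G f \<in> chon ?G"
        using restr_chon[OF f(1), of ?G] chon_mono[of "?G \<inter> (?G \<union> ?Fm)" ?G] by blast
      then have "boundary S (restr ?G f) \<in> ?X" by (rule imageI)
      then have a: "boundary S (restr ?G f) \<in> V.span (?X \<union> ?Y)" by (intro V.span_base UnI1)
      have "restr ?Fm f \<in> chon ?Fm"
        using restr_chon[OF f(1), of ?Fm] chon_mono[of "?Fm \<inter> (?G \<union> ?Fm)" ?Fm] by blast
      then have "boundary S (restr ?Fm f) \<in> ?Y" by (rule imageI)
      then have b: "boundary S (restr ?Fm f) \<in> V.span (?X \<union> ?Y)" by (intro V.span_base UnI2)
      show "x \<in> V.span (?X \<union> ?Y)" unfolding xe by (rule V.span_add[OF a b])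
    qed
  qed
  have "V.dim ?T = V.dim ?X + V.dim ?Y" using ge le by linarith
  then show ?case using Suc.IH by (simp only: sum.lessThan_Suc)
qed

lemma arith_betti:
  fixes z b c :: "nat \<Rightarrow> nat"
  assumes "\<And>k. c k = z k + b k" "\<And>k. b (Suc k) \<le> z k" "b 0 = 0"
  shows "int (\<Sum>k\<le>n. z k - b (Suc k)) = int (\<Sum>k\<le>n. c k) - 2 * int (\<Sum>k\<le>n. b k) - int (b (Suc n))"
proof (induction n)
  case 0
  then show ?case using assms(1)[of 0] assms(2)[of 0] assms(3) by simp
next
  case (Suc n)
  have "int (\<Sum>k\<le>Suc n. z k - b (Suc k)) = int (\<Sum>k\<le>n. z k - b (Suc k)) + int (z (Suc n) - b (Suc (Suc n)))"
    by simp
  also have "int (z (Suc n) - b (Suc (Suc n))) = int (z (Suc n)) - int (b (Suc (Suc n)))"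
    using assms(2)[of "Suc n"] by simp
  finally show ?case using Suc.IH assms(1)[of "Suc n"] by simp
qed

lemma betti_formula:
  fixes S :: "'a::linorder set" and K :: "'k::field itself"
  assumes S: "finite S" and FS: "F \<subseteq> Pow S" and dc: "dclosed F"
  shows "int (\<Sum>k\<le>card S. reduced_betti K S F k)
    = int (card F) - 2 * int (V.dim (boundary S ` chon F :: ('a set \<Rightarrow> 'k) set))"
proof -
  have finF: "finite F" using S FS by (meson finite_Pow_iff rev_finite_subset)
  have finmem: "\<forall>\<sigma>\<in>F. finite \<sigma>" using S FS by (auto intro: rev_finite_subset)
  define Fk where "Fk k = {\<sigma>\<in>F. card \<sigma> = k}" for k
  define z where "z k = V.dim {f \<in> chon (Fk k) :: ('a set \<Rightarrow> 'k) set. boundary S f = 0}" for k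
  define b where "b k = V.dim (boundary S ` chon (Fk k) :: ('a set \<Rightarrow> 'k) set)" for k
  define c where "c k = card (Fk k)" for k
  let ?n = "card S"
  have finFk: "finite (Fk k)" for k using finF unfolding Fk_def by simp
  have FkF: "Fk k \<subseteq> F" for k unfolding Fk_def by auto
  have spF: "chon F \<subseteq> V.span (delta ` F :: ('a set \<Rightarrow> 'k) set)" by (rule chon_fd[OF finF])
  have rb: "reduced_betti K S F k = z k - b (Suc k)" for k
    unfolding reduced_betti_def chain_dim_V chains_chon z_def b_def Fk_def ..
  have rn: "c k = z k + b k" for k
  proof -
    have "V.dim (chon (Fk k) :: ('a set \<Rightarrow> 'k) set) = z k + b k"
      unfolding z_def b_def
    proof (rule V.rank_nullity[OF hom_boundary finite_imageI[OF finFk] chon_fd[OF finFk] chon_subspace])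
      show "finite (delta ` F :: ('a set \<Rightarrow> 'k) set)" using finF by simp
      have "boundary S ` chon (Fk k) \<subseteq> (chon F :: ('a set \<Rightarrow> 'k) set)"
        using boundary_chon[OF dc] chon_mono[OF FkF] by blast
      then show "boundary S ` chon (Fk k) \<subseteq> V.span (delta ` F :: ('a set \<Rightarrow> 'k) set)" using spF by blast
    qed
    moreover have "V.dim (chon (Fk k) :: ('a set \<Rightarrow> 'k) set) = card (Fk k)" by (rule dim_chon[OF finFk])
    ultimately show ?thesis unfolding c_def by simp
  qed
  have incl: "b (Suc k) \<le> z k" for k
  proof -
    have "boundary S ` chon (Fk (Suc k)) \<subseteq> {f \<in> chon (Fk k) :: ('a set \<Rightarrow> 'k) set. boundary S f = 0}"
    proof
      fix x assume "x \<in> boundary S ` chon (Fk (Suc k)) "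
      then obtain f where f: "f \<in> chon (Fk (Suc k))" "x = boundary S f" by blast
      have "x \<in> chon (Fk k)" using boundary_chon_graded[OF dc finmem] f unfolding Fk_def by blast
      moreover have "boundary S x = 0"
      proof -
        have "f \<sigma> \<noteq> 0 \<Longrightarrow> finite \<sigma>" for \<sigma> using f(1) finmem FkF unfolding chon_def by blast
        then show ?thesis using bd_bd[OF S] f(2) by blast
      qed
      ultimately show "x \<in> {f \<in> chon (Fk k). boundary S f = 0}" by simp
    qed
    moreover have "{f \<in> chon (Fk k) :: ('a set \<Rightarrow> 'k) set. boundary S f = 0} \<subseteq> V.span (delta ` Fk k)"
      using chon_fd[OF finFk] by blast
    ultimately show ?thesis unfolding b_def z_def
      using V.dim_mono_fd[OF finite_imageI[OF finFk]] by blast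
  qed
  have b0: "b 0 = 0"
  proof -
    have "Fk 0 \<subseteq> {{}}" using finmem unfolding Fk_def by auto
    then have "\<And>x. x \<in> chon (Fk 0) \<Longrightarrow> boundary S x = (0 :: 'a set \<Rightarrow> 'k)"
      using boundary_zero_deg by blast
    then show ?thesis unfolding b_def by (rule image_zero_dim)
  qed
  have bn: "b (Suc ?n) = 0"
  proof -
    have "Fk (Suc ?n) = {}"
    proof -
      { fix \<sigma> assume "\<sigma> \<in> F" "card \<sigma> = Suc ?n"
        moreover have "card \<sigma> \<le> ?n" using \<open>\<sigma> \<in> F\<close> FS S by (auto intro: card_mono)
        ultimately have False by simp }
      then show ?thesis unfolding Fk_def by blast
    qed
    then have "\<And>x. x \<in> chon (Fk (Suc ?n)) \<Longrightarrow> boundary S x = (0 :: 'a set \<Rightarrow> 'k)"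
    proof -
      fix x :: "'a set \<Rightarrow> 'k" assume "x \<in> chon (Fk (Suc ?n))"
      then have "x = 0" using \<open>Fk (Suc ?n) = {}\<close> unfolding chon_def by (auto simp: fun_eq_iff)
      then show "boundary S x = 0" using module_hom.zero[OF hom_boundary] by simp
    qed
    then show ?thesis unfolding b_def by (rule image_zero_dim)
  qed
  have cardF: "card F = (\<Sum>k\<le>?n. c k)"
  proof -
    have "(\<Sum>k\<le>?n. c k) = (\<Sum>k\<le>?n. \<Sum>\<sigma> | \<sigma> \<in> F \<and> card \<sigma> = k. 1)"
      unfolding c_def Fk_def by simp
    also have "\<dots> = (\<Sum>\<sigma>\<in>F. 1)"
    proof (rule sum.group[OF finF])
      show "finite {..?n}" by simp
      show "card ` F \<subseteq> {..?n}" using FS S by (auto intro: card_mono)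
    qed
    finally show ?thesis by simp
  qed
  have R: "V.dim (boundary S ` chon F :: ('a set \<Rightarrow> 'k) set) = (\<Sum>k\<le>?n. b k)"
  proof -
    have "{\<sigma>\<in>F. card \<sigma> < Suc ?n} = F" using FS S by (auto intro: card_mono simp: less_Suc_eq_le)
    moreover have "V.dim (boundary S ` chon {\<sigma>\<in>F. card \<sigma> < Suc ?n} :: ('a set \<Rightarrow> 'k) set) = (\<Sum>k<Suc ?n. b k)"
      unfolding b_def Fk_def by (rule dim_graded_sum[OF S FS dc])
    ultimately have "V.dim (boundary S ` chon F :: ('a set \<Rightarrow> 'k) set) = (\<Sum>k<Suc ?n. b k)" by simp
    then show ?thesis using lessThan_Suc_atMost by simp
  qed
  have "int (\<Sum>k\<le>?n. reduced_betti K S F k) = int (\<Sum>k\<le>?n. z k - b (Suc k))" using rb by simp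
  also have "\<dots> = int (\<Sum>k\<le>?n. c k) - 2 * int (\<Sum>k\<le>?n. b k) - int (b (Suc ?n))"
    by (rule arith_betti[OF rn incl b0])
  finally show ?thesis using bn cardF R by simp
qed

definition symirr :: "('a \<Rightarrow> 'a \<Rightarrow> bool) \<Rightarrow> bool" where
  "symirr E \<longleftrightarrow> (\<forall>u v. E u v \<longrightarrow> E v u) \<and> (\<forall>v. \<not> E v v)"

lemma Ind_Pow: "Ind E S \<subseteq> Pow S" unfolding Ind_def by auto

lemma Ind_dclosed: "dclosed (Ind E S)" unfolding Ind_def dclosed_def by blast

lemma btilde_formula:
  fixes S :: "'a::linorder set" and K :: "'k::field itself"
  assumes "finite S"
  shows "int (btilde K E S) = int (card (Ind E S)) - 2 * int (V.dim (boundary S ` chon (Ind E S) :: ('a set \<Rightarrow> 'k) set))"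
  unfolding btilde_def by (rule betti_formula[OF assms Ind_Pow Ind_dclosed])

lemma finite_Ind: "finite S \<Longrightarrow> finite (Ind E S)"
  using Ind_Pow by (meson finite_Pow_iff rev_finite_subset)

definition Phi :: "'a::linorder \<Rightarrow> ('a set \<Rightarrow> 'k::field) \<Rightarrow> ('a set \<Rightarrow> 'k)" where
  "Phi v g = (\<lambda>\<sigma>. if v \<in> \<sigma> then sg (\<sigma> - {v}) v * g (\<sigma> - {v}) else 0)"

lemma hom_Phi: "module_hom chain_scale chain_scale (Phi v :: ('a::linorder set \<Rightarrow> 'k::field) \<Rightarrow> _)"
  by (rule hom_intro) (auto simp: Phi_def fun_eq_iff chain_scale_apply algebra_simps)

lemma Phi_identity:
  fixes g :: "'a::linorder set \<Rightarrow> 'k::field"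
  assumes S: "finite S" and S'S: "S' \<subseteq> S" and vS': "v \<notin> S'" and vS: "v \<in> S"
    and g: "g \<in> chon Q" and QS: "Q \<subseteq> Pow S'" and fin: "\<forall>\<sigma>\<in>Q. finite \<sigma>"
  shows "restr {\<sigma>. v \<in> \<sigma>} (boundary S (Phi v g)) = - Phi v (boundary S' g)"
proof
  fix \<tau>
  show "restr {\<sigma>. v \<in> \<sigma>} (boundary S (Phi v g)) \<tau> = (- Phi v (boundary S' g)) \<tau>"
  proof (cases "v \<in> \<tau>")
    case False
    then show ?thesis by (simp add: restr_def Phi_def)
  next
    case True
    define \<tau>' where "\<tau>' = \<tau> - {v}"
    have tau: "\<tau> = insert v \<tau>'" "v \<notin> \<tau>'" using True unfolding \<tau>'_def by auto
    have gz: "g (insert w \<tau>') = 0" if "\<not> insert w \<tau>' \<subseteq> S'" for w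
      using g QS that unfolding chon_def by blast
    have lhs: "restr {\<sigma>. v \<in> \<sigma>} (boundary S (Phi v g)) \<tau>
        = (\<Sum>w\<in>S - \<tau>. sg \<tau> w * (sg (insert w \<tau>') v * g (insert w \<tau>')))"
    proof -
      have "restr {\<sigma>. v \<in> \<sigma>} (boundary S (Phi v g)) \<tau> = boundary S (Phi v g) \<tau>"
        using True by (simp add: restr_def)
      also have "\<dots> = (\<Sum>w\<in>S - \<tau>. sg \<tau> w * Phi v g (insert w \<tau>))" by (rule boundary_apply)
      also have "\<dots> = (\<Sum>w\<in>S - \<tau>. sg \<tau> w * (sg (insert w \<tau>') v * g (insert w \<tau>')))"
      proof (rule sum.cong[OF refl])
        fix w assume "w \<in> S - \<tau>"
        then have "w \<noteq> v" "w \<notin> \<tau>" using True by auto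
        then have "insert w \<tau> - {v} = insert w \<tau>'" using tau by auto
        then show "sg \<tau> w * Phi v g (insert w \<tau>) = sg \<tau> w * (sg (insert w \<tau>') v * g (insert w \<tau>'))"
          by (simp add: Phi_def tau(1))
      qed
      finally show ?thesis .
    qed
    also have "\<dots> = (\<Sum>w\<in>S' - \<tau>'. sg \<tau> w * (sg (insert w \<tau>') v * g (insert w \<tau>')))"
    proof (rule sum.mono_neutral_right)
      show "finite (S - \<tau>)" using S by simp
      show "S' - \<tau>' \<subseteq> S - \<tau>" using S'S vS' tau by auto
      show "\<forall>w\<in>S - \<tau> - (S' - \<tau>'). sg \<tau> w * (sg (insert w \<tau>') v * g (insert w \<tau>')) = 0"
      proof
        fix w assume "w \<in> S - \<tau> - (S' - \<tau>')"
        then have "w \<notin> S'" using tau by auto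
        then have "g (insert w \<tau>') = 0" using gz by blast
        then show "sg \<tau> w * (sg (insert w \<tau>') v * g (insert w \<tau>')) = 0" by simp
      qed
    qed
    also have "\<dots> = (\<Sum>w\<in>S' - \<tau>'. - (sg \<tau>' v * (sg \<tau>' w * g (insert w \<tau>'))))"
    proof (rule sum.cong[OF refl])
      fix w assume w: "w \<in> S' - \<tau>'"
      show "sg \<tau> w * (sg (insert w \<tau>') v * g (insert w \<tau>')) = - (sg \<tau>' v * (sg \<tau>' w * g (insert w \<tau>')))"
      proof (cases "g (insert w \<tau>') = 0")
        case True then show ?thesis by simp
      next
        case False
        then have "insert w \<tau>' \<in> Q" using g unfolding chon_def by blast
        then have ft: "finite \<tau>'" using fin by auto
        have wv: "w \<noteq> v" "w \<notin> \<tau>'" using w vS' by auto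
        have c1: "card {u \<in> insert v \<tau>'. u < w} = card {u \<in> \<tau>'. u < w} + (if v < w then 1 else 0)"
          by (rule card_less_insert[OF ft tau(2)])
        have c2: "card {u \<in> insert w \<tau>'. u < v} = card {u \<in> \<tau>'. u < v} + (if w < v then 1 else 0)"
          by (rule card_less_insert[OF ft wv(2)])
        show ?thesis
        proof (cases "v < w")
          case True
          then have "\<not> w < v" by simp
          then show ?thesis using True unfolding tau(1) c1 c2 by (simp add: power_add)
        next
          case False
          then have "w < v" using wv(1) by simp
          then show ?thesis using False unfolding tau(1) c1 c2 by (simp add: power_add)
        qed
      qed
    qed
    also have "\<dots> = - (sg \<tau>' v * boundary S' g \<tau>')"
      by (simp add: boundary_apply sum_distrib_left sum_negf)
    also have "\<dots> = (- Phi v (boundary S' g)) \<tau>"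
      using True by (simp add: Phi_def \<tau>'_def)
    finally show ?thesis .
  qed
qed

lemma hom_negPhi: "module_hom chain_scale chain_scale (\<lambda>x. - Phi v x :: 'a::linorder set \<Rightarrow> 'k::field)"
  by (rule hom_intro) (auto simp: Phi_def fun_eq_iff chain_scale_apply algebra_simps)

lemma Phi_chon:
  assumes "g \<in> chon Q" "\<And>\<sigma>. \<sigma> \<in> Q \<Longrightarrow> insert v \<sigma> \<in> D"
  shows "Phi v g \<in> chon D"
proof (unfold chon_def, rule CollectI, intro allI impI)
  fix \<sigma> assume "Phi v g \<sigma> \<noteq> 0"
  then have "v \<in> \<sigma>" "g (\<sigma> - {v}) \<noteq> 0" by (auto simp: Phi_def split: if_splits)
  then have "\<sigma> - {v} \<in> Q" using assms(1) unfolding chon_def by blast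
  then have "insert v (\<sigma> - {v}) \<in> D" by (rule assms(2))
  then show "\<sigma> \<in> D" using \<open>v \<in> \<sigma>\<close> by (simp add: insert_absorb)
qed

lemma Phi_inj:
  assumes "\<And>\<sigma>. \<sigma> \<in> Q \<Longrightarrow> v \<notin> \<sigma>"
  shows "inj_on (\<lambda>x. - Phi v x :: 'a::linorder set \<Rightarrow> 'k::field) (chon Q)"
proof (rule inj_onI)
  fix x y :: "'a set \<Rightarrow> 'k" assume xy: "x \<in> chon Q" "y \<in> chon Q" "- Phi v x = - Phi v y"
  show "x = y"
  proof
    fix \<sigma>
    show "x \<sigma> = y \<sigma>"
    proof (cases "\<sigma> \<in> Q")
      case True
      then have "v \<notin> \<sigma>" by (rule assms)
      then have e: "insert v \<sigma> - {v} = \<sigma>" by auto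
      have "Phi v x (insert v \<sigma>) = Phi v y (insert v \<sigma>)" using xy(3) by (metis minus_equation_iff)
      then have "sg \<sigma> v * x \<sigma> = (sg \<sigma> v * y \<sigma> :: 'k)" unfolding Phi_def e by simp
      then show ?thesis by simp
    next
      case False
      have "x \<sigma> = 0" using xy(1) False unfolding chon_def by blast
      moreover have "y \<sigma> = 0" using xy(2) False unfolding chon_def by blast
      ultimately show ?thesis by simp
    qed
  qed
qed

lemma deletion:
  fixes S :: "'a::linorder set" and K :: "'k::field itself"
  assumes S: "finite S" and E: "symirr E" and vS: "v \<in> S"
  shows "btilde K E S \<le> btilde K E (S - {v}) + btilde K E (S - closed_nbhd S E v)"
proof -
  define D where "D = Ind E S"
  define A where "A = Ind E (S - {v})"
  define S' where "S' = S - closed_nbhd S E v"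
  define Q where "Q = Ind E S'"
  have S'S: "S' \<subseteq> S" and vS': "v \<notin> S'" unfolding S'_def closed_nbhd_def by auto
  have finS': "finite S'" using S S'S by (rule rev_finite_subset)
  have finD: "finite D" unfolding D_def by (rule finite_Ind[OF S])
  have finQ: "finite Q" unfolding Q_def by (rule finite_Ind[OF finS'])
  have finA: "finite A" unfolding A_def using S by (simp add: finite_Ind)
  have QS': "Q \<subseteq> Pow S'" unfolding Q_def by (rule Ind_Pow)
  have finmemQ: "\<forall>\<sigma>\<in>Q. finite \<sigma>" using QS' finS' by (auto intro: rev_finite_subset)
  have vQ: "v \<notin> \<sigma>" if "\<sigma> \<in> Q" for \<sigma> using QS' vS' that by auto
  have A_eq: "A = {\<sigma>\<in>D. v \<notin> \<sigma>}" unfolding A_def D_def Ind_def by auto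
  have Qins: "\<sigma> - {v} \<in> Q" if "\<sigma> \<in> D" "v \<in> \<sigma>" for \<sigma>
    using that E unfolding D_def Q_def Ind_def S'_def closed_nbhd_def symirr_def by blast
  have Qback: "insert v \<sigma> \<in> D" if "\<sigma> \<in> Q" for \<sigma>
    using that E vS unfolding D_def Q_def Ind_def S'_def closed_nbhd_def symirr_def by blast
  have cardD: "card D = card A + card Q"
  proof -
    have "D = A \<union> insert v ` Q"
    proof
      show "D \<subseteq> A \<union> insert v ` Q"
      proof
        fix \<sigma> assume "\<sigma> \<in> D"
        show "\<sigma> \<in> A \<union> insert v ` Q"
        proof (cases "v \<in> \<sigma>")
          case True
          then have "\<sigma> = insert v (\<sigma> - {v})" by auto
          then show ?thesis using Qins[OF \<open>\<sigma> \<in> D\<close> True] by blast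
        next
          case False then show ?thesis using A_eq \<open>\<sigma> \<in> D\<close> by blast
        qed
      qed
      show "A \<union> insert v ` Q \<subseteq> D" using A_eq Qback by blast
    qed
    moreover have "A \<inter> insert v ` Q = {}" using A_eq by auto
    moreover have "inj_on (insert v) Q"
      by (rule inj_onI) (metis Diff_insert_absorb vQ)
    ultimately show ?thesis using finA finQ card_Un_disjoint[of A "insert v ` Q"] card_image by simp
  qed
  let ?d = "boundary S :: ('a set \<Rightarrow> 'k) \<Rightarrow> _"
  let ?d' = "boundary S' :: ('a set \<Rightarrow> 'k) \<Rightarrow> _"
  let ?P = "restr {\<sigma>. v \<in> \<sigma>} :: ('a set \<Rightarrow> 'k) \<Rightarrow> _"
  let ?T = "?d ` chon D"
  let ?X = "?d ` chon A"
  let ?Y = "?d ` (Phi v ` chon Q)"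
  have dcD: "dclosed D" unfolding D_def by (rule Ind_dclosed)
  have dcQ: "dclosed Q" unfolding Q_def by (rule Ind_dclosed)
  have spD: "chon D \<subseteq> V.span (delta ` D :: ('a set \<Rightarrow> 'k) set)" by (rule chon_fd[OF finD])
  have TD: "?T \<subseteq> chon D" using boundary_chon[OF dcD] by blast
  have XT: "?X \<subseteq> ?T" by (rule image_mono[OF chon_mono]) (use A_eq in blast)
  have PhiD: "Phi v ` chon Q \<subseteq> (chon D :: ('a set \<Rightarrow> 'k) set)" using Phi_chon Qback by blast
  have YT: "?Y \<subseteq> ?T" by (rule image_mono[OF PhiD])
  have kill: "?P x = 0" if xX: "x \<in> ?X" for x
  proof -
    obtain f where f: "f \<in> chon A" "x = ?d f" using xX by blast
    have "\<forall>\<sigma>\<in>A. finite \<sigma>" unfolding A_def Ind_def using S by (auto intro: rev_finite_subset)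
    then have "x \<in> chon {\<tau>. \<exists>u. u \<notin> \<tau> \<and> insert u \<tau> \<in> A}" using boundary_support[OF f(1)] f(2) by simp
    moreover have "{\<sigma>. v \<in> \<sigma>} \<inter> {\<tau>. \<exists>u. u \<notin> \<tau> \<and> insert u \<tau> \<in> A} = {}" using A_eq by auto
    ultimately show ?thesis by (rule restr_zero)
  qed
  have PY: "?P ` ?Y = (\<lambda>x. - Phi v x) ` (?d' ` chon Q)"
  proof -
    have "?P ` ?Y = (\<lambda>g. ?P (?d (Phi v g))) ` chon Q" by (simp add: image_image)
    also have "\<dots> = (\<lambda>g. - Phi v (?d' g)) ` chon Q"
      by (rule image_cong[OF refl], rule Phi_identity[OF S S'S vS' vS _ QS' finmemQ])
    also have "\<dots> = (\<lambda>x. - Phi v x) ` (?d' ` chon Q)" by (simp add: image_image)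
    finally show ?thesis .
  qed
  have PYsp: "?P ` ?Y \<subseteq> V.span (delta ` D)"
  proof -
    have "?P ` ?Y \<subseteq> chon D"
    proof
      fix z assume "z \<in> ?P ` ?Y"
      then obtain y where "y \<in> ?Y" "z = ?P y" by blast
      then have "y \<in> chon D" using YT TD by blast
      then have "z \<in> chon ({\<sigma>. v \<in> \<sigma>} \<inter> D)" using restr_chon \<open>z = ?P y\<close> by blast
      then show "z \<in> chon D" using chon_mono[of "{\<sigma>. v \<in> \<sigma>} \<inter> D" D] by blast
    qed
    then show ?thesis using spD by blast
  qed
  have ge: "V.dim ?X + V.dim (?P ` ?Y) \<le> V.dim ?T"
    by (rule V.rank_nullity_ge[OF hom_restr finite_imageI[OF finD] _ subspace_boundary_image XT YT kill
          finite_imageI[OF finD] PYsp]) (use TD spD in blast)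
  have dimPY: "V.dim (?P ` ?Y) = V.dim (?d' ` chon Q)"
  proof -
    have U: "?d' ` chon Q \<subseteq> chon Q" using boundary_chon[OF dcQ] by blast
    have "V.dim ((\<lambda>x. - Phi v x) ` (?d' ` chon Q)) = V.dim (?d' ` chon Q)"
    proof (rule V.dim_inj_image[OF hom_negPhi finite_imageI[OF finQ] _ subspace_boundary_image finite_imageI[OF finD]])
      show "?d' ` chon Q \<subseteq> V.span (delta ` Q)" using U chon_fd[OF finQ] by blast
      show "(\<lambda>x. - Phi v x) ` (?d' ` chon Q) \<subseteq> V.span (delta ` D)" using PY PYsp by simp
      show "inj_on (\<lambda>x. - Phi v x) (?d' ` chon Q)" using Phi_inj[OF vQ] U by (rule inj_on_subset)
    qed
    then show ?thesis using PY by simp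
  qed
  have XA: "?X = (boundary (S - {v}) ` chon A :: ('a set \<Rightarrow> 'k) set)"
  proof (rule image_cong[OF refl])
    fix f :: "'a set \<Rightarrow> 'k" assume "f \<in> chon A"
    show "?d f = boundary (S - {v}) f"
      by (rule boundary_sub[OF \<open>f \<in> chon A\<close> _ _ S]) (use Ind_Pow A_def in auto)
  qed
  have R: "V.dim (boundary (S - {v}) ` chon A :: ('a set \<Rightarrow> 'k) set) + V.dim (?d' ` chon Q) \<le> V.dim ?T"
    using ge dimPY XA by simp
  have f1: "int (btilde K E S) = int (card D) - 2 * int (V.dim ?T)"
    unfolding D_def by (rule btilde_formula[OF S])
  have f2: "int (btilde K E (S - {v})) = int (card A) - 2 * int (V.dim (boundary (S - {v}) ` chon A :: ('a set \<Rightarrow> 'k) set))"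
    unfolding A_def by (rule btilde_formula) (use S in simp)
  have f3: "int (btilde K E S') = int (card Q) - 2 * int (V.dim (?d' ` chon Q))"
    unfolding Q_def by (rule btilde_formula[OF finS'])
  have "int (btilde K E S) \<le> int (btilde K E (S - {v})) + int (btilde K E S')"
    using f1 f2 f3 cardD R by linarith
  then show ?thesis unfolding S'_def by linarith
qed

definition invc :: "'a::linorder set \<Rightarrow> 'a set \<Rightarrow> nat" where
  "invc C \<sigma> = card {p \<in> (\<sigma> \<inter> C) \<times> (\<sigma> - C). snd p < fst p}"

definition ss :: "'a::linorder set \<Rightarrow> 'a set \<Rightarrow> 'k::field" where
  "ss C \<sigma> = (- 1) ^ invc C \<sigma>"

definition tens :: "'a::linorder set \<Rightarrow> ('a set \<Rightarrow> 'k::field) \<Rightarrow> ('a set \<Rightarrow> 'k) \<Rightarrow> ('a set \<Rightarrow> 'k)" where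
  "tens C f g = (\<lambda>\<sigma>. ss C \<sigma> * f (\<sigma> \<inter> C) * g (\<sigma> - C))"

definition slice :: "'a::linorder set \<Rightarrow> 'a set \<Rightarrow> 'a set \<Rightarrow> ('a set \<Rightarrow> 'k::field) \<Rightarrow> ('a set \<Rightarrow> 'k)" where
  "slice C G \<beta> \<Phi> = (\<lambda>\<gamma>. if \<gamma> \<subseteq> G then ss C (\<beta> \<union> \<gamma>) * \<Phi> (\<beta> \<union> \<gamma>) else 0)"

lemma neg1_sq: "((- 1 :: 'k::ring_1) ^ n) * (- 1) ^ n = 1"
  by (metis power_add power_minus1_even mult_2)

lemma ss_sq: "ss C \<sigma> * ss C \<sigma> = (1 :: 'k::field)"
  unfolding ss_def by (rule neg1_sq)

lemma sign_A: "(- 1 :: 'k::comm_ring_1) ^ (a + b) * (- 1) ^ (i + b) = (- 1) ^ a * (- 1) ^ i"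
proof -
  have "(- 1 :: 'k) ^ (a + b) * (- 1) ^ (i + b) = (- 1) ^ a * (- 1) ^ i * ((- 1) ^ b * (- 1) ^ b)"
    by (simp add: power_add mult_ac)
  then show ?thesis by (simp add: neg1_sq)
qed

lemma sign_B:
  assumes "a + c = k"
  shows "(- 1 :: 'k::comm_ring_1) ^ (a + b) * (- 1) ^ (i + c) = (- 1) ^ k * ((- 1) ^ i * (- 1) ^ b)"
proof -
  have "(- 1 :: 'k) ^ (a + b) * (- 1) ^ (i + c) = (- 1) ^ (a + c) * ((- 1) ^ i * (- 1) ^ b)"
    by (simp add: power_add mult_ac)
  then show ?thesis using assms by simp
qed

lemma cnt_split:
  assumes "A \<inter> B = {}" "finite A" "finite B"
  shows "card {u \<in> A \<union> B. P u} = card {u \<in> A. P u} + card {u \<in> B. P u}"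
proof -
  have "{u \<in> A \<union> B. P u} = {u \<in> A. P u} \<union> {u \<in> B. P u}" by auto
  then show ?thesis using assms by (simp add: card_Un_disjoint disjoint_iff)
qed

lemma cnt_ins_left:
  fixes X :: "'a::linorder set"
  assumes "finite X" "finite Y" "v \<notin> X"
  shows "card {p \<in> insert v X \<times> Y. snd p < fst p} = card {p \<in> X \<times> Y. snd p < fst p} + card {b \<in> Y. b < v}"
proof -
  have "{p \<in> insert v X \<times> Y. snd p < fst p} = {p \<in> X \<times> Y. snd p < fst p} \<union> (\<lambda>b. (v, b)) ` {b \<in> Y. b < v}"
    by auto
  moreover have "{p \<in> X \<times> Y. snd p < fst p} \<inter> (\<lambda>b. (v, b)) ` {b \<in> Y. b < v} = {}" using assms(3) by auto
  moreover have "card ((\<lambda>b. (v, b)) ` {b \<in> Y. b < v}) = card {b \<in> Y. b < v}"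
    by (rule card_image) (auto intro: inj_onI)
  ultimately show ?thesis using assms(1,2) by (simp add: card_Un_disjoint)
qed

lemma cnt_ins_right:
  fixes X :: "'a::linorder set"
  assumes "finite X" "finite Y" "v \<notin> Y"
  shows "card {p \<in> X \<times> insert v Y. snd p < fst p} = card {p \<in> X \<times> Y. snd p < fst p} + card {a \<in> X. v < a}"
proof -
  have "{p \<in> X \<times> insert v Y. snd p < fst p} = {p \<in> X \<times> Y. snd p < fst p} \<union> (\<lambda>a. (a, v)) ` {a \<in> X. v < a}"
    by auto
  moreover have "{p \<in> X \<times> Y. snd p < fst p} \<inter> (\<lambda>a. (a, v)) ` {a \<in> X. v < a} = {}" using assms(3) by auto
  moreover have "card ((\<lambda>a. (a, v)) ` {a \<in> X. v < a}) = card {a \<in> X. v < a}"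
    by (rule card_image) (auto intro: inj_onI)
  ultimately show ?thesis using assms(1,2) by (simp add: card_Un_disjoint)
qed

lemma cnt_lt_gt:
  fixes X :: "'a::linorder set"
  assumes "finite X" "v \<notin> X"
  shows "card {a \<in> X. a < v} + card {a \<in> X. v < a} = card X"
proof -
  have "x < v \<or> v < x" if "x \<in> X" for x using assms(2) that by (cases x v rule: linorder_cases) auto
  then have "X = {a \<in> X. a < v} \<union> {a \<in> X. v < a}" by blast
  then have "card X = card ({a \<in> X. a < v} \<union> {a \<in> X. v < a})" by simp
  also have "\<dots> = card {a \<in> X. a < v} + card {a \<in> X. v < a}"
    by (rule card_Un_disjoint) (use assms(1) in auto)
  finally show ?thesis by simp
qed

lemma product_rule:
  fixes f g :: "'a::linorder set \<Rightarrow> 'k::field"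
  assumes CG: "C \<inter> G = {}" and fC: "finite C" and fG: "finite G"
    and f: "\<And>\<alpha>. f \<alpha> \<noteq> 0 \<Longrightarrow> \<alpha> \<subseteq> C \<and> card \<alpha> = k"
    and g: "\<And>\<beta>. g \<beta> \<noteq> 0 \<Longrightarrow> \<beta> \<subseteq> G"
  shows "boundary (C \<union> G) (tens C f g)
    = tens C (boundary (C \<union> G) f) g + chain_scale ((- 1) ^ k) (tens C f (boundary (C \<union> G) g))"
proof
  fix \<tau>
  let ?S = "C \<union> G"
  let ?tC = "\<tau> \<inter> C" and ?tG = "\<tau> - C"
  have split: "?S - \<tau> = (C - \<tau>) \<union> (G - \<tau>)" by auto
  have disj: "(C - \<tau>) \<inter> (G - \<tau>) = {}" using CG by auto
  have "boundary ?S (tens C f g) \<tau> = (\<Sum>v\<in>?S - \<tau>. sg \<tau> v * tens C f g (insert v \<tau>))"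
    by (rule boundary_apply)
  also have "\<dots> = (\<Sum>v\<in>C - \<tau>. sg \<tau> v * tens C f g (insert v \<tau>)) + (\<Sum>v\<in>G - \<tau>. sg \<tau> v * tens C f g (insert v \<tau>))"
    unfolding split by (rule sum.union_disjoint) (use fC fG disj in auto)
  also have "(\<Sum>v\<in>C - \<tau>. sg \<tau> v * tens C f g (insert v \<tau>)) = tens C (boundary ?S f) g \<tau>"
  proof (cases "g ?tG = 0")
    case True
    have "(\<Sum>v\<in>C - \<tau>. sg \<tau> v * tens C f g (insert v \<tau>)) = 0"
    proof (rule sum.neutral, rule ballI)
      fix v assume "v \<in> C - \<tau>"
      then have "insert v \<tau> - C = ?tG" by auto
      then show "sg \<tau> v * tens C f g (insert v \<tau>) = 0" using True by (simp add: tens_def)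
    qed
    then show ?thesis using True by (simp add: tens_def)
  next
    case False
    then have tGG: "?tG \<subseteq> G" using g by blast
    then have ftG: "finite ?tG" using fG by (meson rev_finite_subset)
    have ftC: "finite ?tC" using fC by simp
    have bf: "boundary ?S f ?tC = (\<Sum>v\<in>C - \<tau>. sg ?tC v * f (insert v ?tC))"
    proof -
      have "boundary ?S f ?tC = (\<Sum>v\<in>?S - ?tC. sg ?tC v * f (insert v ?tC))" by (rule boundary_apply)
      also have "\<dots> = (\<Sum>v\<in>C - \<tau>. sg ?tC v * f (insert v ?tC))"
      proof (rule sum.mono_neutral_right)
        show "finite (?S - ?tC)" using fC fG by simp
        show "C - \<tau> \<subseteq> ?S - ?tC" by auto
        show "\<forall>v\<in>?S - ?tC - (C - \<tau>). sg ?tC v * f (insert v ?tC) = 0"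
        proof
          fix v assume "v \<in> ?S - ?tC - (C - \<tau>)"
          then have "v \<notin> C" by auto
          then have "\<not> insert v ?tC \<subseteq> C" by auto
          then have "f (insert v ?tC) = 0" using f by blast
          then show "sg ?tC v * f (insert v ?tC) = 0" by simp
        qed
      qed
      finally show ?thesis .
    qed
    have "(\<Sum>v\<in>C - \<tau>. sg \<tau> v * tens C f g (insert v \<tau>)) = (\<Sum>v\<in>C - \<tau>. ss C \<tau> * (sg ?tC v * f (insert v ?tC)) * g ?tG)"
    proof (rule sum.cong[OF refl])
      fix v assume v: "v \<in> C - \<tau>"
      have e1: "insert v \<tau> \<inter> C = insert v ?tC" "insert v \<tau> - C = ?tG" using v by auto
      have tau: "\<tau> = ?tC \<union> ?tG" by auto
      have a: "card {u \<in> \<tau>. u < v} = card {u \<in> ?tC. u < v} + card {u \<in> ?tG. u < v}"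
        by (subst tau, rule cnt_split) (use ftC ftG in auto)
      have b: "invc C (insert v \<tau>) = invc C \<tau> + card {b \<in> ?tG. b < v}"
        unfolding invc_def e1 by (rule cnt_ins_left[OF ftC ftG]) (use v in auto)
      have "sg \<tau> v * ss C (insert v \<tau>) = ((- 1 :: 'k) ^ (card {u \<in> ?tC. u < v} + card {u \<in> ?tG. u < v}))
          * (- 1) ^ (invc C \<tau> + card {u \<in> ?tG. u < v})"
        unfolding a b ss_def ..
      also have "\<dots> = sg ?tC v * ss C \<tau>" unfolding sign_A ss_def ..
      finally have sgn: "sg \<tau> v * ss C (insert v \<tau>) = (sg ?tC v * ss C \<tau> :: 'k)" .
      have "sg \<tau> v * tens C f g (insert v \<tau>) = (sg \<tau> v * ss C (insert v \<tau>)) * f (insert v ?tC) * g ?tG"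
        unfolding tens_def e1 by (simp add: mult_ac)
      also have "\<dots> = ss C \<tau> * (sg ?tC v * f (insert v ?tC)) * g ?tG" unfolding sgn by (simp add: mult_ac)
      finally show "sg \<tau> v * tens C f g (insert v \<tau>) = ss C \<tau> * (sg ?tC v * f (insert v ?tC)) * g ?tG" .
    qed
    also have "\<dots> = ss C \<tau> * boundary ?S f ?tC * g ?tG"
      unfolding bf by (simp add: sum_distrib_left sum_distrib_right)
    also have "\<dots> = tens C (boundary ?S f) g \<tau>" by (simp add: tens_def)
    finally show ?thesis .
  qed
  also have "(\<Sum>v\<in>G - \<tau>. sg \<tau> v * tens C f g (insert v \<tau>)) = chain_scale ((- 1) ^ k) (tens C f (boundary ?S g)) \<tau>"
  proof (cases "f ?tC = 0")
    case True
    have "(\<Sum>v\<in>G - \<tau>. sg \<tau> v * tens C f g (insert v \<tau>)) = 0"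
    proof (rule sum.neutral, rule ballI)
      fix v assume "v \<in> G - \<tau>"
      then have "insert v \<tau> \<inter> C = ?tC" using CG by auto
      then show "sg \<tau> v * tens C f g (insert v \<tau>) = 0" using True by (simp add: tens_def)
    qed
    then show ?thesis using True by (simp add: tens_def chain_scale_apply)
  next
    case False
    then have tCC: "card ?tC = k" using f by blast
    have ftC: "finite ?tC" using fC by simp
    have bg: "boundary ?S g ?tG = (\<Sum>v\<in>G - \<tau>. sg ?tG v * g (insert v ?tG))"
    proof -
      have "boundary ?S g ?tG = (\<Sum>v\<in>?S - ?tG. sg ?tG v * g (insert v ?tG))" by (rule boundary_apply)
      also have "\<dots> = (\<Sum>v\<in>G - \<tau>. sg ?tG v * g (insert v ?tG))"
      proof (rule sum.mono_neutral_right)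
        show "finite (?S - ?tG)" using fC fG by simp
        show "G - \<tau> \<subseteq> ?S - ?tG" by auto
        show "\<forall>v\<in>?S - ?tG - (G - \<tau>). sg ?tG v * g (insert v ?tG) = 0"
        proof
          fix v assume "v \<in> ?S - ?tG - (G - \<tau>)"
          then have "v \<notin> G" using CG by auto
          then have "\<not> insert v ?tG \<subseteq> G" by auto
          then have "g (insert v ?tG) = 0" using g by blast
          then show "sg ?tG v * g (insert v ?tG) = 0" by simp
        qed
      qed
      finally show ?thesis .
    qed
    have "(\<Sum>v\<in>G - \<tau>. sg \<tau> v * tens C f g (insert v \<tau>))
        = (\<Sum>v\<in>G - \<tau>. (- 1) ^ k * (ss C \<tau> * f ?tC * (sg ?tG v * g (insert v ?tG))))"
    proof (rule sum.cong[OF refl])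
      fix v assume v: "v \<in> G - \<tau>"
      show "sg \<tau> v * tens C f g (insert v \<tau>) = (- 1) ^ k * (ss C \<tau> * f ?tC * (sg ?tG v * g (insert v ?tG)))"
      proof (cases "g (insert v ?tG) = 0")
        case True
        have "insert v \<tau> - C = insert v ?tG" using v CG by auto
        then show ?thesis using True by (simp add: tens_def)
      next
        case False
        then have "insert v ?tG \<subseteq> G" using g by blast
        then have ftG: "finite ?tG" using fG by (meson insert_subset rev_finite_subset)
        have vC: "v \<notin> C" using v CG by auto
        have e1: "insert v \<tau> \<inter> C = ?tC" "insert v \<tau> - C = insert v ?tG" using v vC by auto
        have tau: "\<tau> = ?tC \<union> ?tG" by auto
        have a: "card {u \<in> \<tau>. u < v} = card {u \<in> ?tC. u < v} + card {u \<in> ?tG. u < v}"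
          by (subst tau, rule cnt_split) (use ftC ftG in auto)
        have b: "invc C (insert v \<tau>) = invc C \<tau> + card {a \<in> ?tC. v < a}"
          unfolding invc_def e1 by (rule cnt_ins_right[OF ftC ftG]) (use v in auto)
        have c: "card {u \<in> ?tC. u < v} + card {a \<in> ?tC. v < a} = k"
          using cnt_lt_gt[OF ftC, of v] vC tCC by auto
        have "sg \<tau> v * ss C (insert v \<tau>) = ((- 1 :: 'k) ^ (card {u \<in> ?tC. u < v} + card {u \<in> ?tG. u < v}))
            * (- 1) ^ (invc C \<tau> + card {a \<in> ?tC. v < a})"
          unfolding a b ss_def ..
        also have "\<dots> = (- 1) ^ k * (ss C \<tau> * sg ?tG v)" unfolding sign_B[OF c] ss_def ..
        finally have sgn: "sg \<tau> v * ss C (insert v \<tau>) = ((- 1) ^ k * (ss C \<tau> * sg ?tG v) :: 'k)" .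
        have "sg \<tau> v * tens C f g (insert v \<tau>) = (sg \<tau> v * ss C (insert v \<tau>)) * f ?tC * g (insert v ?tG)"
          unfolding tens_def e1 by (simp add: mult_ac)
        also have "\<dots> = (- 1) ^ k * (ss C \<tau> * f ?tC * (sg ?tG v * g (insert v ?tG)))"
          unfolding sgn by (simp add: mult_ac)
        finally show ?thesis .
      qed
    qed
    also have "\<dots> = (- 1) ^ k * (ss C \<tau> * f ?tC * boundary ?S g ?tG)"
      unfolding bg by (simp add: sum_distrib_left)
    also have "\<dots> = chain_scale ((- 1) ^ k) (tens C f (boundary ?S g)) \<tau>"
      by (simp add: tens_def chain_scale_apply)
    finally show ?thesis .
  qed
  finally show "boundary ?S (tens C f g) \<tau> = (tens C (boundary ?S f) g + chain_scale ((- 1) ^ k) (tens C f (boundary ?S g))) \<tau>"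
    by simp
qed

lemma slice_tens:
  assumes "\<beta> \<subseteq> C" "C \<inter> G = {}" "\<And>\<gamma>. g \<gamma> \<noteq> 0 \<Longrightarrow> \<gamma> \<subseteq> G"
  shows "slice C G \<beta> (tens C f g) = chain_scale (f \<beta>) g"
proof
  fix \<gamma>
  show "slice C G \<beta> (tens C f g) \<gamma> = chain_scale (f \<beta>) g \<gamma>"
  proof (cases "\<gamma> \<subseteq> G")
    case True
    have e: "(\<beta> \<union> \<gamma>) \<inter> C = \<beta>" "(\<beta> \<union> \<gamma>) - C = \<gamma>" using True assms(1,2) by auto
    have "slice C G \<beta> (tens C f g) \<gamma> = (ss C (\<beta> \<union> \<gamma>) * ss C (\<beta> \<union> \<gamma>)) * f \<beta> * g \<gamma>"
      using True unfolding slice_def tens_def e by (simp add: mult_ac)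
    then show ?thesis by (simp add: ss_sq chain_scale_apply)
  next
    case False
    then have "g \<gamma> = 0" using assms(3) by blast
    then show ?thesis using False by (simp add: slice_def chain_scale_apply)
  qed
qed

lemma hom_slice: "module_hom chain_scale chain_scale (slice C G \<beta> :: ('a::linorder set \<Rightarrow> 'k::field) \<Rightarrow> _)"
  by (rule hom_intro) (auto simp: slice_def fun_eq_iff chain_scale_apply algebra_simps)

lemma tens_chon:
  assumes "f \<in> chon FX" "g \<in> chon FY" "\<And>\<alpha> \<beta>. \<alpha> \<in> FX \<Longrightarrow> \<beta> \<in> FY \<Longrightarrow> \<alpha> \<union> \<beta> \<in> FJ"
  shows "tens C f g \<in> chon FJ"
proof (unfold chon_def, rule CollectI, intro allI impI)
  fix \<sigma> assume "tens C f g \<sigma> \<noteq> 0"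
  then have "f (\<sigma> \<inter> C) \<noteq> 0" "g (\<sigma> - C) \<noteq> 0" by (auto simp: tens_def)
  then have "\<sigma> \<inter> C \<in> FX" "\<sigma> - C \<in> FY" using assms(1,2) unfolding chon_def by blast+
  then have "(\<sigma> \<inter> C) \<union> (\<sigma> - C) \<in> FJ" by (rule assms(3))
  moreover have "(\<sigma> \<inter> C) \<union> (\<sigma> - C) = \<sigma>" by auto
  ultimately show "\<sigma> \<in> FJ" by simp
qed

lemma tens_zero_right: "tens C f 0 = 0"
  by (simp add: tens_def fun_eq_iff)

lemma chain_scale_zero: "chain_scale c (0 :: 'a set \<Rightarrow> 'k::field) = 0"
  by (simp add: fun_eq_iff chain_scale_apply)

context vector_space begin

lemma indexed_indep:
  assumes fin: "finite I" and ind: "\<And>c. (\<Sum>i\<in>I. c i *s v i) = 0 \<Longrightarrow> \<forall>i\<in>I. c i = 0"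
  shows "inj_on v I" "independent (v ` I)"
proof -
  show inj: "inj_on v I"
  proof (rule inj_onI, rule ccontr)
    fix i j assume ij: "i \<in> I" "j \<in> I" "v i = v j" "i \<noteq> j"
    define c :: "_ \<Rightarrow> 'a" where "c k = (if k = i then 1 else if k = j then - 1 else 0)" for k
    have "(\<Sum>k\<in>I. c k *s v k) = (\<Sum>k\<in>I. (if k = i then v i else 0) + (if k = j then - v j else 0))"
      by (rule sum.cong[OF refl]) (use ij in \<open>auto simp: c_def\<close>)
    also have "\<dots> = v i - v j" using fin ij by (simp add: sum.distrib)
    also have "\<dots> = 0" using ij by simp
    finally have "\<forall>k\<in>I. c k = 0" by (rule ind)
    then have "c i = 0" using ij(1) by blast
    then show False by (simp add: c_def)
  qed
  show "independent (v ` I)"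
    unfolding independent_explicit_module
  proof (intro allI impI)
    fix t u w assume t: "finite t" "t \<subseteq> v ` I" and s: "(\<Sum>w\<in>t. u w *s w) = 0" and w: "w \<in> t"
    define c where "c i = (if v i \<in> t then u (v i) else 0)" for i
    have "(\<Sum>i\<in>I. c i *s v i) = (\<Sum>i\<in>{i\<in>I. v i \<in> t}. u (v i) *s v i)"
      unfolding c_def by (rule sum.mono_neutral_cong_right) (use fin in auto)
    also have "\<dots> = (\<Sum>w\<in>v ` {i\<in>I. v i \<in> t}. u w *s w)"
      by (rule sum.reindex[symmetric, unfolded comp_def]) (rule inj_on_subset[OF inj], auto)
    also have "v ` {i\<in>I. v i \<in> t} = t" using t(2) by auto
    finally have "\<forall>i\<in>I. c i = 0" using s by (intro ind) simp
    moreover obtain i where "i \<in> I" "w = v i" using w t(2) by blast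
    ultimately show "u w = 0" using w by (auto simp: c_def)
  qed
qed

lemma sum_inj_indep_zero:
  assumes "finite L" "inj_on f L" "independent (f ` L)" "(\<Sum>l\<in>L. r l *s f l) = 0" "l \<in> L"
  shows "r l = 0"
proof -
  have "(\<Sum>y\<in>f ` L. r (the_inv_into L f y) *s y) = (\<Sum>l\<in>L. r l *s f l)"
    by (subst sum.reindex[OF assms(2)]) (simp add: the_inv_into_f_f[OF assms(2)])
  then have s0: "(\<Sum>y\<in>f ` L. r (the_inv_into L f y) *s y) = 0" using assms(4) by simp
  have "r (the_inv_into L f (f l)) = 0"
    by (rule independentD[OF assms(3) _ _ s0]) (use assms(1,5) in auto)
  then show ?thesis using the_inv_into_f_f[OF assms(2,5)] by simp
qed

lemma span_disj_zero:
  assumes ind: "independent (B1 \<union> B2)" and disj: "B1 \<inter> B2 = {}" and fin: "finite B1" "finite B2"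
    and y: "y \<in> span B1" and z: "z \<in> span B2" and yz: "y + z = 0"
  shows "y = 0"
proof -
  obtain p where p: "y = (\<Sum>w\<in>B1. p w *s w)" using y span_finite[OF fin(1)] by auto
  obtain q where q: "z = (\<Sum>w\<in>B2. q w *s w)" using z span_finite[OF fin(2)] by auto
  define c where "c w = (if w \<in> B1 then p w else q w)" for w
  have "(\<Sum>w\<in>B1 \<union> B2. c w *s w) = (\<Sum>w\<in>B1. c w *s w) + (\<Sum>w\<in>B2. c w *s w)"
    by (rule sum.union_disjoint) (use fin disj in auto)
  also have "(\<Sum>w\<in>B1. c w *s w) = y" unfolding p c_def by (rule sum.cong) auto
  also have "(\<Sum>w\<in>B2. c w *s w) = z" unfolding q c_def by (rule sum.cong) (use disj in auto)
  finally have s0: "(\<Sum>w\<in>B1 \<union> B2. c w *s w) = 0" using yz by simp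
  have "c w = 0" if "w \<in> B1" for w
    by (rule independentD[OF ind _ _ s0]) (use fin that in auto)
  then have "(\<Sum>w\<in>B1. c w *s w) = 0" by simp
  then show ?thesis unfolding c_def using p by simp
qed

end

lemma Ind_join:
  assumes "\<forall>a\<in>C. \<forall>b\<in>G. \<not> E a b \<and> \<not> E b a" "\<alpha> \<in> Ind E C" "\<beta> \<in> Ind E G"
  shows "\<alpha> \<union> \<beta> \<in> Ind E (C \<union> G)"
  using assms unfolding Ind_def by blast

lemma Ind_split:
  assumes "\<sigma> \<in> Ind E (C \<union> G)"
  shows "\<sigma> \<inter> C \<in> Ind E C" "\<sigma> - C \<in> Ind E G"
  using assms unfolding Ind_def by auto

lemma card_join:
  assumes CG: "C \<inter> G = {}" and ne: "\<forall>a\<in>C. \<forall>b\<in>G. \<not> E a b \<and> \<not> E b a" and fin: "finite C" "finite G"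
  shows "card (Ind E (C \<union> G)) = card (Ind E C) * card (Ind E G)"
proof -
  have "Ind E (C \<union> G) = (\<lambda>p. fst p \<union> snd p) ` (Ind E C \<times> Ind E G)"
  proof
    show "Ind E (C \<union> G) \<subseteq> (\<lambda>p. fst p \<union> snd p) ` (Ind E C \<times> Ind E G)"
    proof
      fix \<sigma> assume s: "\<sigma> \<in> Ind E (C \<union> G)"
      have "\<sigma> = fst (\<sigma> \<inter> C, \<sigma> - C) \<union> snd (\<sigma> \<inter> C, \<sigma> - C)" by auto
      moreover have "(\<sigma> \<inter> C, \<sigma> - C) \<in> Ind E C \<times> Ind E G" using Ind_split[OF s] by simp
      ultimately show "\<sigma> \<in> (\<lambda>p. fst p \<union> snd p) ` (Ind E C \<times> Ind E G)" by blast
    qed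
    show "(\<lambda>p. fst p \<union> snd p) ` (Ind E C \<times> Ind E G) \<subseteq> Ind E (C \<union> G)"
      using Ind_join[OF ne] by auto
  qed
  moreover have "inj_on (\<lambda>p. fst p \<union> snd p) (Ind E C \<times> Ind E G)"
  proof (rule inj_onI)
    fix p q assume pq: "p \<in> Ind E C \<times> Ind E G" "q \<in> Ind E C \<times> Ind E G" "fst p \<union> snd p = fst q \<union> snd q"
    have sub: "fst p \<subseteq> C" "snd p \<subseteq> G" "fst q \<subseteq> C" "snd q \<subseteq> G" using pq(1,2) unfolding Ind_def by auto
    have "fst p = (fst p \<union> snd p) \<inter> C" using sub CG by auto
    also have "\<dots> = (fst q \<union> snd q) \<inter> C" using pq(3) by simp
    also have "\<dots> = fst q" using sub CG by auto
    finally have 1: "fst p = fst q" .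
    have "snd p = (fst p \<union> snd p) - C" using sub CG by auto
    also have "\<dots> = (fst q \<union> snd q) - C" using pq(3) by simp
    also have "\<dots> = snd q" using sub CG by auto
    finally have 2: "snd p = snd q" .
    show "p = q" using 1 2 by (simp add: prod_eq_iff)
  qed
  ultimately show ?thesis by (simp add: card_image card_cartesian_product)
qed

lemma btilde_formula_sub:
  fixes S :: "'a::linorder set" and K :: "'k::field itself"
  assumes "finite S" "C \<subseteq> S"
  shows "int (btilde K E C) = int (card (Ind E C)) - 2 * int (V.dim (boundary S ` chon (Ind E C) :: ('a set \<Rightarrow> 'k) set))"
proof -
  have fC: "finite C" using assms by (meson rev_finite_subset)
  have "boundary S ` chon (Ind E C) = (boundary C ` chon (Ind E C) :: ('a set \<Rightarrow> 'k) set)"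
  proof (rule image_cong[OF refl])
    fix f :: "'a set \<Rightarrow> 'k" assume "f \<in> chon (Ind E C)"
    show "boundary S f = boundary C f" by (rule boundary_sub[OF \<open>f \<in> chon (Ind E C)\<close> _ assms(2,1)]) (use Ind_Pow in auto)
  qed
  then show ?thesis using btilde_formula[OF fC, of K E] by simp
qed

lemma delta_chon: "\<alpha> \<in> F \<Longrightarrow> (delta \<alpha> :: 'a set \<Rightarrow> 'k::field) \<in> chon F"
  by (auto simp: chon_def delta_def split: if_splits)

lemma kunneth:
  fixes K :: "'k::field itself" and C G :: "'a::linorder set"
  assumes fC: "finite C" and fG: "finite G" and CG: "C \<inter> G = {}"
    and ne: "\<forall>a\<in>C. \<forall>b\<in>G. \<not> E a b \<and> \<not> E b a"
  shows "btilde K E (C \<union> G) \<le> btilde K E C * btilde K E G"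
proof -
  define S where "S = C \<union> G"
  have fS: "finite S" unfolding S_def using fC fG by simp
  define FX where "FX = Ind E C"
  define FY where "FY = Ind E G"
  define FJ where "FJ = Ind E S"
  let ?d = "boundary S :: ('a set \<Rightarrow> 'k) \<Rightarrow> _"
  have hd: "module_hom chain_scale chain_scale ?d" by (rule hom_boundary)
  have finFX: "finite FX" unfolding FX_def by (rule finite_Ind[OF fC])
  have finFY: "finite FY" unfolding FY_def by (rule finite_Ind[OF fG])
  have finFJ: "finite FJ" unfolding FJ_def by (rule finite_Ind[OF fS])
  have dcX: "dclosed FX" unfolding FX_def by (rule Ind_dclosed)
  have dcY: "dclosed FY" unfolding FY_def by (rule Ind_dclosed)
  have dcJ: "dclosed FJ" unfolding FJ_def by (rule Ind_dclosed)
  have FXC: "\<alpha> \<subseteq> C" if "\<alpha> \<in> FX" for \<alpha> using that Ind_Pow unfolding FX_def by blast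
  have FYG: "\<beta> \<subseteq> G" if "\<beta> \<in> FY" for \<beta> using that Ind_Pow unfolding FY_def by blast
  have join: "\<alpha> \<union> \<beta> \<in> FJ" if "\<alpha> \<in> FX" "\<beta> \<in> FY" for \<alpha> \<beta>
    using Ind_join[OF ne that[unfolded FX_def FY_def]] unfolding FJ_def S_def .
  have spX: "chon FX \<subseteq> V.span (delta ` FX :: ('a set \<Rightarrow> 'k) set)" by (rule chon_fd[OF finFX])
  have spY: "chon FY \<subseteq> V.span (delta ` FY :: ('a set \<Rightarrow> 'k) set)" by (rule chon_fd[OF finFY])
  have spJ: "chon FJ \<subseteq> V.span (delta ` FJ :: ('a set \<Rightarrow> 'k) set)" by (rule chon_fd[OF finFJ])
  have dX: "?d x \<in> chon FX" if "x \<in> chon FX" for x using boundary_chon[OF dcX that] .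
  have dY: "?d x \<in> chon FY" if "x \<in> chon FY" for x using boundary_chon[OF dcY that] .
  have dJ: "?d x \<in> chon FJ" if "x \<in> chon FJ" for x using boundary_chon[OF dcJ that] .
  have dd: "?d (?d x) = 0" if "x \<in> chon F" "F \<subseteq> Pow S" for x F
  proof (rule bd_bd[OF fS])
    fix \<sigma> assume "x \<sigma> \<noteq> 0"
    then have "\<sigma> \<in> F" using that(1) unfolding chon_def by blast
    then show "finite \<sigma>" using that(2) fS by (auto intro: rev_finite_subset)
  qed
  have FYS: "FY \<subseteq> Pow S" using FYG unfolding S_def by blast
  have FXS: "FX \<subseteq> Pow S" using FXC unfolding S_def by blast
  define RX where "RX = V.dim (?d ` chon FX)"
  define RY where "RY = V.dim (?d ` chon FY)"
  define RJ where "RJ = V.dim (?d ` chon FJ)"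
  define ZY where "ZY = {x \<in> chon FY. ?d x = 0}"
  have "ZY = chon FY \<inter> {x. ?d x = 0}" unfolding ZY_def by blast
  then have subZY: "V.subspace ZY"
    using V.subspace_inter[OF chon_subspace module_hom.subspace_kernel[OF hd]] by simp
  have preY: "?d ` chon FY \<subseteq> V.span (delta ` FY)" using dY spY by blast
  obtain L where L: "L \<subseteq> chon FY" "inj_on ?d L" "V.independent (?d ` L)" "?d ` chon FY \<subseteq> V.span (?d ` L)"
      "finite L" "card L = V.dim (?d ` chon FY)"
    by (rule V.lift_basis[OF hd finite_imageI[OF finFY] preY])
  have cardL: "card L = RY" using L(6) unfolding RY_def .
  have dLZ: "?d ` L \<subseteq> ZY"
  proof
    fix x assume "x \<in> ?d ` L"
    then obtain l where l: "l \<in> L" "x = ?d l" by blast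
    then have "l \<in> chon FY" using L(1) by blast
    then have "x \<in> chon FY" "?d x = 0" using dY[of l] dd[of l FY] FYS l(2) by auto
    then show "x \<in> ZY" unfolding ZY_def by simp
  qed
  obtain Bz where Bz: "?d ` L \<subseteq> Bz" "Bz \<subseteq> ZY" "V.independent Bz" "ZY \<subseteq> V.span Bz"
    using V.maximal_independent_subset_extend[OF dLZ L(3)] by blast
  have ZYsp: "ZY \<subseteq> V.span (delta ` FY)" unfolding ZY_def using spY by blast
  have finBz: "finite Bz" and cBz: "card Bz \<le> V.dim ZY"
    using V.indep_card_le_dim[OF finite_imageI[OF finFY] ZYsp Bz(2,3)] by auto
  have "V.dim ZY \<le> card Bz" using V.dim_le_card[OF Bz(4) finBz] .
  then have cardBz: "card Bz = V.dim ZY" using cBz by simp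
  define Hb where "Hb = Bz - ?d ` L"
  have cardHb: "card Hb = V.dim ZY - RY"
    unfolding Hb_def using card_Diff_subset[OF finite_imageI[OF L(5)] Bz(1)] cardBz card_image[OF L(2)] cardL by simp
  have rnY: "card FY = V.dim ZY + RY"
  proof -
    have "V.dim (chon FY :: ('a set \<Rightarrow> 'k) set) = V.dim ZY + RY"
      unfolding ZY_def RY_def
      by (rule V.rank_nullity[OF hd finite_imageI[OF finFY] spY chon_subspace finite_imageI[OF finFY]])
        (use spY dY in blast)
    moreover have "V.dim (chon FY :: ('a set \<Rightarrow> 'k) set) = card FY" by (rule dim_chon[OF finFY])
    ultimately show ?thesis by simp
  qed
  have dXsp: "?d ` (delta ` FX) \<subseteq> V.span (delta ` FX)"
  proof -
    have "delta ` FX \<subseteq> (chon FX :: ('a set \<Rightarrow> 'k) set)" by (auto simp: chon_def delta_def split: if_splits)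
    then show ?thesis using dX spX by blast
  qed
  obtain L0 where L0: "L0 \<subseteq> delta ` FX" "inj_on ?d L0" "V.independent (?d ` L0)"
      "?d ` (delta ` FX) \<subseteq> V.span (?d ` L0)" "finite L0" "card L0 = V.dim (?d ` (delta ` FX))"
    using V.lift_basis[OF hd finite_imageI[OF finFX] dXsp] by blast
  have dimL0: "V.dim (?d ` (delta ` FX)) = RX"
  proof -
    have "V.span (?d ` (delta ` FX)) = ?d ` V.span (delta ` FX)" by (rule module_hom.span_image[OF hd])
    also have "V.span (delta ` FX) = chon FX" by (rule chon_span[OF finFX, symmetric])
    finally have "V.dim (V.span (?d ` (delta ` FX))) = RX" unfolding RX_def by simp
    then show ?thesis by simp
  qed
  define A0 where "A0 = {\<alpha> \<in> FX. (delta \<alpha> :: 'a set \<Rightarrow> 'k) \<in> L0}"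
  have dA0: "delta ` A0 = L0" unfolding A0_def using L0(1) by auto
  have "card ((delta :: 'a set \<Rightarrow> 'a set \<Rightarrow> 'k) ` A0) = card A0"
    by (rule card_image[OF inj_on_subset[OF delta_inj]]) simp
  then have cardA0: "card A0 = RX" using dA0 L0(6) dimL0 by simp
  have A0X: "A0 \<subseteq> FX" unfolding A0_def by blast
  have finA0: "finite A0" using finFX A0X by (rule rev_finite_subset)
  have finHb: "finite Hb" unfolding Hb_def using finBz by simp
  have HbZ: "Hb \<subseteq> ZY" unfolding Hb_def using Bz(2) by blast
  have HbY: "Hb \<subseteq> chon FY" using HbZ unfolding ZY_def by blast
  have indHb: "V.independent Hb" unfolding Hb_def using Bz(3) V.independent_mono by blast
  have BzU: "Bz = ?d ` L \<union> Hb" and BzD: "?d ` L \<inter> Hb = {}" unfolding Hb_def using Bz(1) by auto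
  have RYZ: "RY \<le> V.dim ZY"
    using card_mono[OF finBz Bz(1)] cardBz card_image[OF L(2)] cardL by simp
  have supY: "\<beta> \<subseteq> G" if "g \<in> chon FY" "g \<beta> \<noteq> 0" for g \<beta> using that FYG unfolding chon_def by blast
  have supd: "\<sigma> \<subseteq> C \<and> card \<sigma> = card \<alpha>" if "\<alpha> \<in> FX" "(delta \<alpha> :: 'a set \<Rightarrow> 'k) \<sigma> \<noteq> 0" for \<alpha> \<sigma>
    using that FXC by (auto simp: delta_def split: if_splits)
  have prod: "?d (tens C (delta \<alpha>) g) = tens C (?d (delta \<alpha>)) g + chain_scale ((- 1) ^ card \<alpha>) (tens C (delta \<alpha>) (?d g))"
    if "\<alpha> \<in> FX" "g \<in> chon FY" for \<alpha> g
    unfolding S_def by (rule product_rule[OF CG fC fG]) (use supd[OF that(1)] supY[OF that(2)] in auto)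
  define vl where "vl = (\<lambda>p::'a set \<times> ('a set \<Rightarrow> 'k). ?d (tens C (delta (fst p)) (snd p)))"
  define vr where "vr = (\<lambda>p::'a set \<times> ('a set \<Rightarrow> 'k). tens C (?d (delta (fst p))) (snd p))"
  define Ix where "Ix = Inl ` (FX \<times> L) \<union> Inr ` (A0 \<times> Hb)"
  define vec where "vec = case_sum vl vr"
  have finIx: "finite Ix" unfolding Ix_def using finFX L(5) finA0 finHb by simp
  have vecJ: "vec ` Ix \<subseteq> ?d ` chon FJ"
  proof
    fix x assume "x \<in> vec ` Ix"
    then consider (l) p where "p \<in> FX \<times> L" "x = vl p" | (r) p where "p \<in> A0 \<times> Hb" "x = vr p"
      unfolding Ix_def vec_def by auto
    then show "x \<in> ?d ` chon FJ"
    proof cases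
      case l
      have "tens C (delta (fst p)) (snd p) \<in> chon FJ"
        by (rule tens_chon[OF delta_chon, of _ FX _ FY]) (use l L(1) join in auto)
      then show ?thesis using l unfolding vl_def by blast
    next
      case r
      have a: "fst p \<in> FX" using r A0X by auto
      have h: "snd p \<in> ZY" using r HbZ by auto
      then have hY: "snd p \<in> chon FY" "?d (snd p) = 0" unfolding ZY_def by auto
      have "?d (tens C (delta (fst p)) (snd p)) = vr p"
        using prod[OF a hY(1)] hY(2) unfolding vr_def by (simp add: tens_zero_right chain_scale_zero)
      moreover have "tens C (delta (fst p)) (snd p) \<in> chon FJ"
        by (rule tens_chon[OF delta_chon, of _ FX _ FY]) (use a hY join in auto)
      ultimately show ?thesis using r by (metis image_eqI)
    qed
  qed
  have spLZ: "V.span (?d ` L) \<subseteq> ZY" by (rule V.span_minimal[OF dLZ subZY])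
  have spHZ: "V.span Hb \<subseteq> ZY" by (rule V.span_minimal[OF HbZ subZY])
  have decomp: "y' = 0 \<and> z' = 0"
    if xyz: "x' \<in> V.span L" "y' \<in> V.span (?d ` L)" "z' \<in> V.span Hb" "x' + y' + z' = 0" for x' y' z'
  proof -
    have "?d y' = 0" using xyz(2) spLZ unfolding ZY_def by blast
    moreover have "?d z' = 0" using xyz(3) spHZ unfolding ZY_def by blast
    moreover have "?d x' + ?d y' + ?d z' = 0"
      using arg_cong[OF xyz(4), of ?d] module_hom.add[OF hd] module_hom.zero[OF hd] by simp
    ultimately have dx: "?d x' = 0" by simp
    obtain r where r: "x' = (\<Sum>l\<in>L. chain_scale (r l) l)" using xyz(1) V.span_finite[OF L(5)] by auto
    have "(\<Sum>l\<in>L. chain_scale (r l) (?d l)) = ?d x'"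
      unfolding r by (simp add: module_hom.sum[OF hd] module_hom.scale[OF hd])
    then have "(\<Sum>l\<in>L. chain_scale (r l) (?d l)) = 0" using dx by simp
    then have "r l = 0" if "l \<in> L" for l using V.sum_inj_indep_zero[OF L(5) L(2) L(3)] that by blast
    then have "x' = 0" unfolding r by (simp add: V.scale_zero_left)
    then have yz: "y' + z' = 0" using xyz(4) by simp
    have "y' = 0"
      by (rule V.span_disj_zero[of "?d ` L" Hb]) (use Bz(3) BzU BzD L(5) finHb xyz(2,3) yz in auto)
    moreover then have "z' = 0" using yz by simp
    ultimately show ?thesis by simp
  qed
  have dFX: "?d (delta \<alpha>) \<in> chon FX" if "\<alpha> \<in> FX" for \<alpha> using dX[OF delta_chon[OF that]] .
  have indep: "\<forall>i\<in>Ix. c i = 0" if hs: "(\<Sum>i\<in>Ix. chain_scale (c i) (vec i)) = 0" for c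
  proof -
    define a where "a p = c (Inl p)" for p
    define e where "e p = c (Inr p)" for p
    have hs': "(\<Sum>p\<in>FX \<times> L. chain_scale (a p) (vl p)) + (\<Sum>p\<in>A0 \<times> Hb. chain_scale (e p) (vr p)) = 0"
    proof -
      have "(\<Sum>i\<in>Ix. chain_scale (c i) (vec i)) = (\<Sum>i\<in>Inl ` (FX \<times> L). chain_scale (c i) (vec i)) + (\<Sum>i\<in>Inr ` (A0 \<times> Hb). chain_scale (c i) (vec i))"
        unfolding Ix_def by (rule sum.union_disjoint) (use finFX L(5) finA0 finHb in auto)
      also have "(\<Sum>i\<in>Inl ` (FX \<times> L). chain_scale (c i) (vec i)) = (\<Sum>p\<in>FX \<times> L. chain_scale (a p) (vl p))"
        by (subst sum.reindex) (auto simp: a_def vec_def)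
      also have "(\<Sum>i\<in>Inr ` (A0 \<times> Hb). chain_scale (c i) (vec i)) = (\<Sum>p\<in>A0 \<times> Hb. chain_scale (e p) (vr p))"
        by (subst sum.reindex) (auto simp: e_def vec_def)
      finally show ?thesis using hs by metis
    qed
    have main: "(\<forall>l\<in>L. a (\<beta>, l) = 0) \<and> (\<forall>h\<in>Hb. (\<Sum>\<alpha>\<in>A0. e (\<alpha>, h) * ?d (delta \<alpha>) \<beta>) = 0)" if b: "\<beta> \<in> FX" for \<beta>
    proof -
      let ?sl = "slice C G \<beta> :: ('a set \<Rightarrow> 'k) \<Rightarrow> _"
      have hsl: "module_hom chain_scale chain_scale ?sl" by (rule hom_slice)
      have bC: "\<beta> \<subseteq> C" using FXC[OF b] .
      have sl_vl: "?sl (vl p) = chain_scale (?d (delta (fst p)) \<beta>) (snd p)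
          + chain_scale ((- 1) ^ card (fst p) * delta (fst p) \<beta>) (?d (snd p))" if p: "p \<in> FX \<times> L" for p
      proof -
        have pf: "fst p \<in> FX" and ps: "snd p \<in> chon FY" using p L(1) by auto
        have "?sl (vl p) = ?sl (tens C (?d (delta (fst p))) (snd p)) + chain_scale ((- 1) ^ card (fst p)) (?sl (tens C (delta (fst p)) (?d (snd p))))"
          unfolding vl_def prod[OF pf ps] module_hom.add[OF hsl] module_hom.scale[OF hsl] ..
        also have "?sl (tens C (?d (delta (fst p))) (snd p)) = chain_scale (?d (delta (fst p)) \<beta>) (snd p)"
          by (rule slice_tens[OF bC CG]) (use supY[OF ps] in blast)
        also have "?sl (tens C (delta (fst p)) (?d (snd p))) = chain_scale (delta (fst p) \<beta>) (?d (snd p))"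
          by (rule slice_tens[OF bC CG]) (use supY[OF dY[OF ps]] in blast)
        finally show ?thesis by (simp only: V.scale_scale)
      qed
      have sl_vr: "?sl (vr p) = chain_scale (?d (delta (fst p)) \<beta>) (snd p)" if p: "p \<in> A0 \<times> Hb" for p
      proof -
        have ps: "snd p \<in> chon FY" using p HbY by auto
        show ?thesis unfolding vr_def by (rule slice_tens[OF bC CG]) (use supY[OF ps] in blast)
      qed
      define x where "x = (\<Sum>p\<in>FX \<times> L. chain_scale (a p * ?d (delta (fst p)) \<beta>) (snd p))"
      define y where "y = (\<Sum>p\<in>FX \<times> L. chain_scale (a p * ((- 1) ^ card (fst p) * delta (fst p) \<beta>)) (?d (snd p)))"
      define z where "z = (\<Sum>p\<in>A0 \<times> Hb. chain_scale (e p * ?d (delta (fst p)) \<beta>) (snd p))"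
      have "0 = ?sl ((\<Sum>p\<in>FX \<times> L. chain_scale (a p) (vl p)) + (\<Sum>p\<in>A0 \<times> Hb. chain_scale (e p) (vr p)))"
        using hs' module_hom.zero[OF hsl] by simp
      also have "\<dots> = (\<Sum>p\<in>FX \<times> L. chain_scale (a p) (?sl (vl p))) + (\<Sum>p\<in>A0 \<times> Hb. chain_scale (e p) (?sl (vr p)))"
        by (simp only: module_hom.add[OF hsl] module_hom.sum[OF hsl] module_hom.scale[OF hsl])
      also have "(\<Sum>p\<in>FX \<times> L. chain_scale (a p) (?sl (vl p))) = x + y"
        unfolding x_def y_def sum.distrib[symmetric]
        by (rule sum.cong[OF refl]) (simp only: sl_vl V.scale_right_distrib V.scale_scale)
      also have "(\<Sum>p\<in>A0 \<times> Hb. chain_scale (e p) (?sl (vr p))) = z"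
        unfolding z_def by (rule sum.cong[OF refl]) (simp only: sl_vr V.scale_scale)
      finally have xyz: "x + y + z = 0" by (simp only: add.assoc)
      have xL: "x \<in> V.span L" unfolding x_def
        by (rule V.span_sum, rule V.span_scale, rule V.span_base) auto
      have yL: "y \<in> V.span (?d ` L)" unfolding y_def
        by (rule V.span_sum, rule V.span_scale, rule V.span_base) auto
      have zH: "z \<in> V.span Hb" unfolding z_def
        by (rule V.span_sum, rule V.span_scale, rule V.span_base) auto
      have y0: "y = 0" and z0: "z = 0" using decomp[OF xL yL zH xyz] by auto
      have "y = (\<Sum>\<alpha>\<in>FX. \<Sum>l\<in>L. chain_scale (a (\<alpha>, l) * ((- 1) ^ card \<alpha> * delta \<alpha> \<beta>)) (?d l))"
        unfolding y_def by (simp add: sum.cartesian_product case_prod_beta)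
      also have "\<dots> = (\<Sum>\<alpha>\<in>FX. if \<alpha> = \<beta> then (\<Sum>l\<in>L. chain_scale (a (\<beta>, l) * (- 1) ^ card \<beta>) (?d l)) else 0)"
        by (rule sum.cong[OF refl]) (auto simp: delta_def V.scale_zero_left)
      also have "\<dots> = (\<Sum>l\<in>L. chain_scale (a (\<beta>, l) * (- 1) ^ card \<beta>) (?d l))"
        using b finFX by simp
      finally have "(\<Sum>l\<in>L. chain_scale (a (\<beta>, l) * (- 1) ^ card \<beta>) (?d l)) = 0" using y0 by simp
      then have "a (\<beta>, l) * (- 1) ^ card \<beta> = 0" if "l \<in> L" for l
        using V.sum_inj_indep_zero[OF L(5) L(2) L(3), of "\<lambda>l. a (\<beta>, l) * (- 1) ^ card \<beta>"] that by blast
      then have A: "\<forall>l\<in>L. a (\<beta>, l) = 0" by simp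
      have "z = (\<Sum>\<alpha>\<in>A0. \<Sum>h\<in>Hb. chain_scale (e (\<alpha>, h) * ?d (delta \<alpha>) \<beta>) h)"
        unfolding z_def by (simp add: sum.cartesian_product case_prod_beta)
      also have "\<dots> = (\<Sum>h\<in>Hb. \<Sum>\<alpha>\<in>A0. chain_scale (e (\<alpha>, h) * ?d (delta \<alpha>) \<beta>) h)" by (rule sum.swap)
      also have "\<dots> = (\<Sum>h\<in>Hb. chain_scale (\<Sum>\<alpha>\<in>A0. e (\<alpha>, h) * ?d (delta \<alpha>) \<beta>) h)"
        by (simp add: V.scale_sum_left)
      finally have "(\<Sum>h\<in>Hb. chain_scale (\<Sum>\<alpha>\<in>A0. e (\<alpha>, h) * ?d (delta \<alpha>) \<beta>) h) = 0" using z0 by simp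
      then have "(\<Sum>\<alpha>\<in>A0. e (\<alpha>, h) * ?d (delta \<alpha>) \<beta>) = 0" if "h \<in> Hb" for h
        using V.independentD[OF indHb finHb order_refl, where u = "\<lambda>h. \<Sum>\<alpha>\<in>A0. e (\<alpha>, h) * ?d (delta \<alpha>) \<beta>"] that by blast
      then show ?thesis using A by blast
    qed
    have aZ: "a p = 0" if "p \<in> FX \<times> L" for p using main[of "fst p"] that by (cases p) auto
    have eZ: "e (\<alpha>, h) = 0" if "\<alpha> \<in> A0" "h \<in> Hb" for \<alpha> h
    proof -
      have fz: "(\<Sum>\<alpha>\<in>A0. chain_scale (e (\<alpha>, h)) (?d (delta \<alpha>))) = 0"
      proof
        fix \<beta>
        show "(\<Sum>\<alpha>\<in>A0. chain_scale (e (\<alpha>, h)) (?d (delta \<alpha>))) \<beta> = 0 \<beta>"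
        proof (cases "\<beta> \<in> FX")
          case True
          then show ?thesis using main[OF True] that(2) by (simp add: fun_sum_apply chain_scale_apply)
        next
          case False
          have "?d (delta \<alpha>) \<beta> = 0" if "\<alpha> \<in> A0" for \<alpha>
            using dFX[of \<alpha>] that A0X False unfolding chon_def by blast
          then show ?thesis by (simp add: fun_sum_apply chain_scale_apply)
        qed
      qed
      have i1: "inj_on ?d (delta ` A0)" using L0(2) dA0 by simp
      have "inj_on (?d \<circ> delta) A0" by (rule comp_inj_on[OF inj_on_subset[OF delta_inj] i1]) simp
      then have inj2: "inj_on (\<lambda>\<alpha>. ?d (delta \<alpha>)) A0" by (simp add: comp_def)
      have im2: "(\<lambda>\<alpha>. ?d (delta \<alpha>)) ` A0 = ?d ` L0" using dA0 by (auto simp: image_image[symmetric])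
      show ?thesis using V.sum_inj_indep_zero[OF finA0 inj2, of "\<lambda>\<alpha>. e (\<alpha>, h)"] im2 L0(3) fz that(1) by simp
    qed
    show ?thesis unfolding Ix_def using aZ eZ by (auto simp: a_def e_def)
  qed
  have cardIx: "card Ix = card FX * RY + RX * (V.dim ZY - RY)"
  proof -
    have "card Ix = card (FX \<times> L) + card (A0 \<times> Hb)"
      unfolding Ix_def by (subst card_Un_disjoint) (use finFX L(5) finA0 finHb in \<open>auto simp: card_image\<close>)
    then show ?thesis using cardL cardA0 cardHb by (simp add: card_cartesian_product)
  qed
  have injv: "inj_on vec Ix" and indv: "V.independent (vec ` Ix)"
    using V.indexed_indep[OF finIx indep] by auto
  have spdJ: "?d ` chon FJ \<subseteq> V.span (delta ` FJ)" using spJ dJ by blast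
  have "card (vec ` Ix) \<le> RJ" unfolding RJ_def
    by (rule V.indep_card_le_dim(2)[OF finite_imageI[OF finFJ] spdJ vecJ indv])
  then have RJge: "card Ix \<le> RJ" using card_image[OF injv] by simp
  have bJ: "int (btilde K E S) = int (card FJ) - 2 * int RJ"
    unfolding FJ_def RJ_def by (rule btilde_formula[OF fS])
  have bX: "int (btilde K E C) = int (card FX) - 2 * int RX"
    unfolding FX_def RX_def by (rule btilde_formula_sub[OF fS]) (simp add: S_def)
  have bY: "int (btilde K E G) = int (card FY) - 2 * int RY"
    unfolding FY_def RY_def by (rule btilde_formula_sub[OF fS]) (simp add: S_def)
  have cJ: "card FJ = card FX * card FY"
    unfolding FJ_def FX_def FY_def S_def by (rule card_join[OF CG ne fC fG])
  define nx where "nx = int (card FX)"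
  define rx where "rx = int RX"
  define ry where "ry = int RY"
  define dz where "dz = int (V.dim ZY)"
  have ny: "int (card FY) = dz + ry" unfolding dz_def ry_def using rnY by simp
  have "card FX * RY + RX * (V.dim ZY - RY) \<le> RJ" using RJge cardIx by simp
  then have r1: "int (card FX * RY + RX * (V.dim ZY - RY)) \<le> int RJ" by (rule of_nat_mono)
  have r2: "int (card FX * RY + RX * (V.dim ZY - RY)) = nx * ry + rx * (dz - ry)"
    unfolding nx_def rx_def ry_def dz_def using RYZ by (simp add: of_nat_diff)
  have rj: "nx * ry + rx * (dz - ry) \<le> int RJ" using r1 r2 by simp
  have "int (btilde K E S) = nx * (dz + ry) - 2 * int RJ" using bJ cJ ny unfolding nx_def by simp
  also have "\<dots> \<le> nx * (dz + ry) - 2 * (nx * ry + rx * (dz - ry))" using rj by simp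
  also have "\<dots> = (nx - 2 * rx) * ((dz + ry) - 2 * ry)" by (simp add: algebra_simps)
  also have "\<dots> = int (btilde K E C) * int (btilde K E G)" using bX bY ny unfolding nx_def rx_def ry_def by simp
  finally have "int (btilde K E S) \<le> int (btilde K E C * btilde K E G)" by (simp only: of_nat_mult)
  then show ?thesis unfolding S_def by (simp only: of_nat_le_iff)
qed

lemma component_facts:
  assumes sym: "\<forall>u v. E u v \<longrightarrow> E v u" and comp: "is_component E S C"
  shows "C \<subseteq> S" "\<forall>a\<in>C. \<forall>b\<in>S - C. \<not> E a b \<and> \<not> E b a"
proof -
  obtain x where x: "x \<in> S" "C = component_of E S x" using comp unfolding is_component_def by blast
  show "C \<subseteq> S" unfolding x(2) component_of_def by blast
  show "\<forall>a\<in>C. \<forall>b\<in>S - C. \<not> E a b \<and> \<not> E b a"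
  proof (intro ballI)
    fix a b assume a: "a \<in> C" and b: "b \<in> S - C"
    let ?R = "{(u, w). u \<in> S \<and> w \<in> S \<and> E u w}"
    have ax: "(x, a) \<in> ?R\<^sup>*" "a \<in> S" using a unfolding x(2) component_of_def by auto
    have "\<not> E a b"
    proof
      assume "E a b"
      then have "(a, b) \<in> ?R" using ax(2) b by auto
      then have "(x, b) \<in> ?R\<^sup>*" using ax(1) by (meson rtrancl_into_rtrancl)
      then have "b \<in> C" using b unfolding x(2) component_of_def by auto
      then show False using b by blast
    qed
    moreover have "\<not> E b a" using \<open>\<not> E a b\<close> sym by blast
    ultimately show "\<not> E a b \<and> \<not> E b a" by simp
  qed
qed

theorem lemmaA1:
  fixes K :: "'k::field itself"
    and V :: "'a::linorder set" and E :: "'a \<Rightarrow> 'a \<Rightarrow> bool"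
    and vs :: "'a list" and C :: "'a set"
  assumes graph: "simple_graph V E"
    and vs_dist: "distinct vs" and vs_in: "set vs \<subseteq> V" and vs_ne: "vs \<noteq> []"
    and cut: "\<not> (\<exists>x \<in> V - set vs. V - set vs = component_of E (V - set vs) x)"
    and comp: "is_component E (V - set vs) C"
  shows "btilde K E V \<le>
           btilde K E C * btilde K E (V - set vs - C)
           + (\<Sum>i<length vs. btilde K E (V - closed_nbhd V E (vs ! i) - set (take i vs)))"
proof -
  have finV: "finite V" and sym: "\<forall>u v. E u v \<longrightarrow> E v u" and irr: "\<forall>v. \<not> E v v"
    using graph unfolding simple_graph_def by auto
  have si: "symirr E" unfolding symirr_def using sym irr by blast
  have step: "btilde K E V \<le> btilde K E (V - set (take n vs))
      + (\<Sum>i<n. btilde K E (V - closed_nbhd V E (vs ! i) - set (take i vs)))" if "n \<le> length vs" for n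
    using that
  proof (induction n)
    case 0
    then show ?case by simp
  next
    case (Suc n)
    then have nl: "n < length vs" by simp
    define Sn where "Sn = V - set (take n vs)"
    define v where "v = vs ! n"
    have vV: "v \<in> V" using nl vs_in unfolding v_def by auto
    have vnot: "v \<notin> set (take n vs)"
    proof -
      have "v \<in> set (drop n vs)" unfolding v_def using Cons_nth_drop_Suc[OF nl] by (metis list.set_intros(1))
      then show ?thesis using set_take_disj_set_drop_if_distinct[OF vs_dist order_refl, of n] by blast
    qed
    have vS: "v \<in> Sn" unfolding Sn_def using vV vnot by simp
    have finSn: "finite Sn" unfolding Sn_def using finV by simp
    have d: "btilde K E Sn \<le> btilde K E (Sn - {v}) + btilde K E (Sn - closed_nbhd Sn E v)"
      by (rule deletion[OF finSn si vS])
    have e1: "Sn - {v} = V - set (take (Suc n) vs)"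
      unfolding Sn_def v_def using take_Suc_conv_app_nth[OF nl] by auto
    have e2: "Sn - closed_nbhd Sn E v = V - closed_nbhd V E (vs ! n) - set (take n vs)"
      unfolding Sn_def v_def closed_nbhd_def by auto
    have IH: "btilde K E V \<le> btilde K E Sn + (\<Sum>i<n. btilde K E (V - closed_nbhd V E (vs ! i) - set (take i vs)))"
      using Suc.IH nl unfolding Sn_def by simp
    show ?case using IH d unfolding e1 e2 by simp
  qed
  define S where "S = V - set vs"
  have CS: "C \<subseteq> S" and ne0: "\<forall>a\<in>C. \<forall>b\<in>S - C. \<not> E a b \<and> \<not> E b a"
    using component_facts[OF sym comp] unfolding S_def by auto
  have finS: "finite S" unfolding S_def using finV by simp
  have k: "btilde K E (C \<union> (S - C)) \<le> btilde K E C * btilde K E (S - C)"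
    by (rule kunneth) (use finS CS ne0 in \<open>auto intro: rev_finite_subset\<close>)
  have "C \<union> (S - C) = S" using CS by blast
  then have k': "btilde K E S \<le> btilde K E C * btilde K E (V - set vs - C)" using k unfolding S_def by simp
  have "btilde K E V \<le> btilde K E S + (\<Sum>i<length vs. btilde K E (V - closed_nbhd V E (vs ! i) - set (take i vs)))"
    using step[of "length vs"] unfolding S_def by simp
  then show ?thesis using k' by linarith
qed

end
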